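(* Let $u\colon B_1\subset\mathbb{R}^d\to\mathbb{R}$ be infinity-harmonic, i.e. a viscosity solution of $\Delta_\infty u=0$ in $B_1$. Assume $u$ is a function of separable variables, i.e. $$u(X)=\sigma_1(x_1)+\sigma_2(x_2)+\cdots+\sigma_d(x_d),\qquad X=(x_1,\dots,x_d),$$ for continuous real functions $\sigma_i$. Then $u\in C^{1,\frac13}(B_{1/2})$.
   Context: The infinity-Laplacian is $\Delta_\infty v:=\sum_{i,j}v_{x_i}v_{x_j}v_{x_ix_j}=(\nabla v)^t D^2v\,\nabla v$; solutions are understood in the viscosity sense. $B_r$ is the ball of radius $r$ centered at the origin. *)

theory Defs
  imports "HOL-Analysis.Analysis"
begin

definition C2_on :: "(real^'n) set \<Rightarrow> (real^'n \<Rightarrow> real)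
    \<Rightarrow> (real^'n \<Rightarrow> real^'n) \<Rightarrow> (real^'n \<Rightarrow> real^'n^'n) \<Rightarrow> bool" where
  "C2_on S \<phi> g H \<longleftrightarrow>
     (\<forall>x\<in>S. (\<phi> has_derivative (\<lambda>h. g x \<bullet> h)) (at x)) \<and>
     (\<forall>x\<in>S. (g has_derivative (\<lambda>h. H x *v h)) (at x)) \<and>
     continuous_on S H"

definition inf_lap :: "real^'n \<Rightarrow> real^'n^'n \<Rightarrow> real" where
  "inf_lap p X = p \<bullet> (X *v p)"

definition inf_harmonic :: "(real^'n) set \<Rightarrow> (real^'n \<Rightarrow> real) \<Rightarrow> bool" where
  "inf_harmonic S u \<longleftrightarrow>
     continuous_on S u \<and>
     (\<forall>\<phi> g H x0. C2_on S \<phi> g H \<and> x0 \<in> S \<and>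
        (\<exists>r>0. \<forall>x\<in>S \<inter> ball x0 r. u x - \<phi> x \<le> u x0 - \<phi> x0)
        \<longrightarrow> inf_lap (g x0) (H x0) \<ge> 0) \<and>
     (\<forall>\<phi> g H x0. C2_on S \<phi> g H \<and> x0 \<in> S \<and>
        (\<exists>r>0. \<forall>x\<in>S \<inter> ball x0 r. u x - \<phi> x \<ge> u x0 - \<phi> x0)
        \<longrightarrow> inf_lap (g x0) (H x0) \<le> 0)"

definition C1_alpha_on :: "real \<Rightarrow> (real^'n) set \<Rightarrow> (real^'n \<Rightarrow> real) \<Rightarrow> bool" where
  "C1_alpha_on \<alpha> S u \<longleftrightarrow>
     (\<exists>g C. (\<forall>x\<in>S. (u has_derivative (\<lambda>h. g x \<bullet> h)) (at x)) \<and>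
            (\<forall>x\<in>S. \<forall>y\<in>S. norm (g x - g y) \<le> C * dist x y powr \<alpha>))"

end

theory Submission
  imports Defs
begin

definition utouch :: "(real \<Rightarrow> real) \<Rightarrow> real set \<Rightarrow> real \<Rightarrow> real \<Rightarrow> real \<Rightarrow> bool" where
 "utouch f I t p X \<longleftrightarrow> t \<in> I \<and> (\<exists>\<eta>>0. \<forall>s. \<bar>s - t\<bar> < \<eta> \<longrightarrow> s \<in> I \<and> f s \<le> f t + p*(s-t) + X/2*(s-t)^2)"

definition ltouch :: "(real \<Rightarrow> real) \<Rightarrow> real set \<Rightarrow> real \<Rightarrow> real \<Rightarrow> real \<Rightarrow> bool" where
 "ltouch f I t p X \<longleftrightarrow> t \<in> I \<and> (\<exists>\<eta>>0. \<forall>s. \<bar>s - t\<bar> < \<eta> \<longrightarrow> s \<in> I \<and> f s \<ge> f t + p*(s-t) + X/2*(s-t)^2)"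

lemma ltouch_neg: "ltouch f I t p X \<longleftrightarrow> utouch (\<lambda>s. - f s) I t (-p) (-X)"
  unfolding ltouch_def utouch_def
  apply (rule conj_cong, simp)
  apply (rule ex_cong1) apply (rule conj_cong, simp)
  apply (rule all_cong1) by (auto simp: algebra_simps)

lemma utouch_neg: "utouch f I t p X \<longleftrightarrow> ltouch (\<lambda>s. - f s) I t (-p) (-X)"
  using ltouch_neg[of "\<lambda>s. - f s" I t "-p" "-X"] by simp

lemma sub0_convex:
  fixes f :: "real \<Rightarrow> real"
  assumes cont: "continuous_on {a<..<b} f"
    and sub: "\<And>t p X. utouch f {a<..<b} t p X \<Longrightarrow> 0 \<le> p^2*X"
    and xyz: "a < x" "x < y" "y < z" "z < b"
  shows "(f y - f x)*(z - x) \<le> (f z - f x)*(y - x)"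
proof (rule ccontr)
  assume H: "\<not> ?thesis"
  define m where "m = (f z - f x)/(z-x)"
  define g where "g s = f s - (f x + m*(s-x))" for s
  have zx: "z - x > 0" using xyz by simp
  have gy: "g y > 0"
  proof -
    have "(f y - f x)*(z - x) > (f z - f x)*(y - x)" using H by simp
    hence "f y - f x > (f z - f x)/(z-x)*(y - x)" using zx
      by (simp add: field_simps)
    thus ?thesis by (simp add: g_def m_def)
  qed
  define M where "M = g y"
  obtain \<epsilon> where ep: "\<epsilon> > 0" "\<epsilon>*(z-x)^2 < M" "m > 0 \<Longrightarrow> \<epsilon>*(2*(z-x)) < m"
  proof -
    define e1 where "e1 = M/(2*(z-x)^2)"
    define e2 where "e2 = (if m > 0 then m/(4*(z-x)) else 1)"
    have e1: "e1 > 0" "e1*(z-x)^2 < M" using gy zx by (auto simp: e1_def M_def field_simps)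
    have e2: "e2 > 0" "m > 0 \<Longrightarrow> e2*(2*(z-x)) < m" using zx by (auto simp: e2_def field_simps)
    show ?thesis
      apply (rule that[of "min e1 e2"])
      using e1 e2 zx
        apply (auto simp: min_def)
       apply (smt (verit) mult_right_mono zero_le_power2)
      by (smt (verit) mult_right_mono)
  qed
  define h where "h s = g s + \<epsilon>*(s-x)^2" for s
  have conth: "continuous_on {x..z} h"
  proof -
    have "continuous_on {x..z} f" by (rule continuous_on_subset[OF cont]) (use xyz in auto)
    thus ?thesis unfolding h_def g_def by (intro continuous_intros)
  qed
  obtain t where t: "t \<in> {x..z}" "\<And>s. s \<in> {x..z} \<Longrightarrow> h s \<le> h t"
    using continuous_attains_sup[OF compact_Icc _ conth] xyz by auto
  have hx: "h x = 0" by (simp add: h_def g_def)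
  have hz: "h z = \<epsilon>*(z-x)^2" by (simp add: h_def g_def m_def)
  have hy: "h y \<ge> M" using ep by (simp add: h_def M_def)
  have "h t \<ge> h y" using t xyz by auto
  hence tx: "t \<noteq> x" "t \<noteq> z" using hx hz hy ep gy M_def by auto
  hence tin: "x < t" "t < z" using t by auto
  have touch: "utouch f {a<..<b} t (m - 2*\<epsilon>*(t-x)) (-2*\<epsilon>)"
    unfolding utouch_def
  proof (intro conjI exI[of _ "min (t-x) (z-t)"] allI impI)
    show "t \<in> {a<..<b}" using tin xyz by auto
    show "min (t-x) (z-t) > 0" using tin by auto
    fix s assume s: "\<bar>s - t\<bar> < min (t - x) (z - t)"
    hence sin: "s \<in> {x..z}" by auto
    thus "s \<in> {a<..<b}" using xyz by auto
    have "h s \<le> h t" using t sin by auto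
    thus "f s \<le> f t + (m - 2 * \<epsilon> * (t - x)) * (s - t) + - 2 * \<epsilon> / 2 * (s - t)\<^sup>2"
      unfolding h_def g_def by (simp add: algebra_simps power2_eq_square)
  qed
  have "0 \<le> (m - 2*\<epsilon>*(t-x))^2 * (-2*\<epsilon>)" using sub[OF touch] .
  hence "(m - 2*\<epsilon>*(t-x))^2 \<le> 0" using ep(1)
    by (simp add: mult_le_0_iff zero_le_mult_iff)
  hence "m = 2*\<epsilon>*(t-x)" by simp
  moreover have "2*\<epsilon>*(t-x) > 0" using ep tin by simp
  moreover have "2*\<epsilon>*(t-x) < \<epsilon>*(2*(z-x))" using ep tin by simp
  ultimately show False using ep(3) by linarith
qed

lemma utouch_exists:
  fixes f :: "real \<Rightarrow> real"
  assumes cont: "continuous_on {a<..<b} f" and t0: "a < t0" "t0 < b"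
  shows "\<exists>t p X. utouch f {a<..<b} t p X"
proof -
  obtain e0 where e0: "0 < e0" "e0 < t0 - a" "e0 < b - t0"
    using field_lbound_gt_zero[of "t0-a" "b-t0"] t0 by auto
  have eta1: "e0 > 0" "a < t0 - e0" "t0 + e0 < b" using e0 by auto
  note eta = eta1
  have contJ: "continuous_on {t0-e0..t0+e0} f" by (rule continuous_on_subset[OF cont]) (use eta in auto)
  obtain M where M: "\<And>s. s \<in> {t0-e0..t0+e0} \<Longrightarrow> \<bar>f s\<bar> \<le> M"
    using compact_imp_bounded[OF compact_continuous_image[OF contJ compact_Icc]]
    unfolding bounded_iff by fastforce
  define K where "K = (2*M+1)/e0^2"
  have M0: "M \<ge> 0" using M[of t0] eta by auto
  have K0: "K > 0" using M0 eta by (auto simp: K_def)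
  have KE: "K*e0^2 = 2*M+1" using eta by (simp add: K_def)
  define \<psi> where "\<psi> s = f s - K*(s-t0)^2" for s
  have cpsi: "continuous_on {t0-e0..t0+e0} \<psi>" unfolding \<psi>_def using contJ by (intro continuous_intros)
  obtain t where t: "t \<in> {t0-e0..t0+e0}" "\<And>s. s \<in> {t0-e0..t0+e0} \<Longrightarrow> \<psi> s \<le> \<psi> t"
    using continuous_attains_sup[OF compact_Icc _ cpsi] eta by auto
  have "\<psi> t \<ge> \<psi> t0" using t eta by auto
  hence pt: "\<psi> t \<ge> - M" using M[of t0] eta by (auto simp: \<psi>_def)
  have "\<psi> (t0-e0) < -M" "\<psi> (t0+e0) < -M" using M[of "t0-e0"] M[of "t0+e0"] eta KE
    by (auto simp: \<psi>_def)
  hence tin: "t0 - e0 < t" "t < t0+e0" using pt t(1) by (auto simp: le_less) 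
  show ?thesis
    unfolding utouch_def
  proof (intro exI conjI exI[of _ "min (t-(t0-e0)) ((t0+e0)-t)"] allI impI)
    show "t \<in> {a<..<b}" using tin eta by auto
    show "min (t-(t0-e0)) ((t0+e0)-t) > 0" using tin by auto
    fix s assume s: "\<bar>s - t\<bar> < min (t-(t0-e0)) ((t0+e0)-t)"
    hence sin: "s \<in> {t0-e0..t0+e0}" by auto
    thus "s \<in> {a<..<b}" using eta by auto
    have "\<psi> s \<le> \<psi> t" using t sin by auto
    thus "f s \<le> f t + (2*K*(t-t0))*(s-t) + (2*K)/2*(s-t)^2"
      unfolding \<psi>_def by (simp add: algebra_simps power2_eq_square)
  qed
qed

definition cvx :: "(real \<Rightarrow> real) \<Rightarrow> real \<Rightarrow> real \<Rightarrow> bool" where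
  "cvx f a b \<longleftrightarrow> (\<forall>x y z. a < x \<longrightarrow> x < y \<longrightarrow> y < z \<longrightarrow> z < b \<longrightarrow> (f y - f x)*(z - x) \<le> (f z - f x)*(y - x))"

definition sl :: "(real \<Rightarrow> real) \<Rightarrow> real \<Rightarrow> real \<Rightarrow> real" where
  "sl f x y = (f y - f x)/(y - x)"

lemma sl_sym: "sl f x y = sl f y x"
  unfolding sl_def by (metis minus_diff_eq minus_divide_divide)

lemma cvx_sl:
  assumes "cvx f a b" "a < x" "x < y" "y < z" "z < b"
  shows "sl f x y \<le> sl f x z" "sl f x z \<le> sl f y z" "sl f x y \<le> sl f y z"
proof -
  have H: "(f y - f x)*(z - x) \<le> (f z - f x)*(y - x)" using assms unfolding cvx_def by blast
  have p: "y - x > 0" "z - x > 0" "z - y > 0" using assms by auto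
  show 1: "sl f x y \<le> sl f x z" unfolding sl_def using H p
    by (simp add: field_simps)
  have "(f z - f x)*(z - y) \<le> (f z - f y)*(z - x)"
    using H by (simp add: algebra_simps)
  thus 2: "sl f x z \<le> sl f y z" unfolding sl_def using p
    by (simp add: field_simps)
  show "sl f x y \<le> sl f y z" using 1 2 by linarith
qed

lemma sl_eq: "x \<noteq> y \<Longrightarrow> f y = f x + sl f x y * (y - x)"
  unfolding sl_def by simp

lemma cvx_deriv:
  fixes f :: "real \<Rightarrow> real"
  assumes cont: "continuous_on {a<..<b} f" and cv: "cvx f a b" and c: "c > 0"
    and sup: "\<And>t p X. ltouch f {a<..<b} t p X \<Longrightarrow> p^2*X \<le> c"
  shows "\<exists>v. (\<forall>s\<in>{a<..<b}. (f has_real_derivative v s) (at s)) \<and>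
             (\<forall>s t. a < s \<longrightarrow> s < t \<longrightarrow> t < b \<longrightarrow> v s \<le> sl f s t \<and> sl f s t \<le> v t) \<and>
             (\<forall>s\<in>{a<..<b}. isCont v s)"
proof -
  define R where "R t = {sl f t w | w. t < w \<and> w < b}" for t
  define Lf where "Lf t = {sl f w t | w. a < w \<and> w < t}" for t
  define v where "v t = Inf (R t)" for t
  have LR: "l \<le> r" if "t \<in> {a<..<b}" "l \<in> Lf t" "r \<in> R t" for t l r
    using that cvx_sl(3)[OF cv] unfolding Lf_def R_def by auto
  have Rne: "R t \<noteq> {}" "Lf t \<noteq> {}" if tt: "t \<in> {a<..<b}" for t
  proof -
    obtain w where "t < w" "w < b" using tt dense[of t b] by auto
    thus "R t \<noteq> {}" unfolding R_def by auto
    obtain w where "a < w" "w < t" using tt dense[of a t] by auto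
    thus "Lf t \<noteq> {}" unfolding Lf_def by auto
  qed
  have bddR: "bdd_below (R t)" and bddL: "bdd_above (Lf t)" if tt: "t \<in> {a<..<b}" for t
  proof -
    obtain l where "l \<in> Lf t" using Rne[OF tt] by auto
    thus "bdd_below (R t)" using LR[OF tt] by (intro bdd_belowI[of _ l]) blast
    obtain r where "r \<in> R t" using Rne[OF tt] by auto
    thus "bdd_above (Lf t)" using LR[OF tt] by (intro bdd_aboveI[of _ r]) blast
  qed
  have eq: "Sup (Lf t) = Inf (R t)" if t: "t \<in> {a<..<b}" for t
  proof (rule ccontr)
    assume ne: "Sup (Lf t) \<noteq> Inf (R t)"
    have le: "Sup (Lf t) \<le> Inf (R t)"
    proof (rule cSup_least[OF Rne(2)[OF t]])
      fix l assume l: "l \<in> Lf t"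
      show "l \<le> Inf (R t)" by (rule cInf_greatest[OF Rne(1)[OF t]]) (rule LR[OF t l])
    qed
    define Dm where "Dm = Sup (Lf t)"
    define Dp where "Dp = Inf (R t)"
    have lt: "Dm < Dp" using ne le Dm_def Dp_def by auto
    obtain p where p: "Dm < p" "p < Dp" "p \<noteq> 0"
    proof (cases "Dm + Dp = 0")
      case True
      show ?thesis by (rule that[of "Dp/2"]) (use True lt in \<open>auto simp: field_simps\<close>)
    next
      case False
      show ?thesis by (rule that[of "(Dm+Dp)/2"]) (use False lt in \<open>auto simp: field_simps\<close>)
    qed
    define \<delta> where "\<delta> = min (Dp - p) (p - Dm)"
    have d0: "\<delta> > 0" using p by (auto simp: \<delta>_def)
    define K where "K = c / p^2"
    have K0: "K > 0" using c p by (auto simp: K_def)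
    have bnd: "f s \<ge> f t + p*(s - t) + \<delta> * \<bar>s - t\<bar>" if s: "s \<in> {a<..<b}" for s
    proof (cases s t rule: linorder_cases)
      case less
      have "sl f s t \<in> Lf t" using s less unfolding Lf_def by auto
      hence "sl f s t \<le> Dm" unfolding Dm_def using bddL[OF t] by (rule cSup_upper)
      hence "sl f t s * (s - t) \<ge> Dm * (s - t)" using less by (simp add: sl_sym mult_right_mono_neg)
      moreover have "Dm * (s - t) \<ge> (p - \<delta>) * (s - t)" using less p
        by (intro mult_right_mono_neg) (auto simp: \<delta>_def)
      ultimately show ?thesis using sl_eq[of t s f] less by (auto simp: algebra_simps)
    next
      case equal thus ?thesis by simp
    next
      case greater
      have "sl f t s \<in> R t" using s greater unfolding R_def by auto
      hence "Dp \<le> sl f t s" unfolding Dp_def using bddR[OF t] by (rule cInf_lower)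
      hence "sl f t s * (s - t) \<ge> Dp * (s - t)" using greater by (simp add: mult_right_mono)
      moreover have "Dp * (s - t) \<ge> (p + \<delta>) * (s - t)" using greater p
        by (intro mult_right_mono) (auto simp: \<delta>_def)
      ultimately show ?thesis using sl_eq[of t s f] greater by (auto simp: algebra_simps)
    qed
    have "ltouch f {a<..<b} t p (2*K)"
      unfolding ltouch_def
    proof (intro conjI exI[of _ "min (\<delta>/K) (min (t-a) (b-t))"] allI impI)
      show "t \<in> {a<..<b}" using t .
      show "min (\<delta>/K) (min (t-a) (b-t)) > 0" using t d0 K0 by auto
      fix s assume s: "\<bar>s - t\<bar> < min (\<delta>/K) (min (t-a) (b-t))"
      thus sin: "s \<in> {a<..<b}" by auto
      have "\<bar>s - t\<bar> < \<delta>/K" using s by linarith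
      hence h1: "K * \<bar>s - t\<bar> \<le> \<delta>" using K0 by (simp add: pos_less_divide_eq mult.commute)
      have "K * (s-t)^2 = (K * \<bar>s - t\<bar>) * \<bar>s - t\<bar>"
        by (simp add: power2_eq_square abs_mult_self_eq)
      also have "\<dots> \<le> \<delta> * \<bar>s - t\<bar>" by (rule mult_right_mono[OF h1]) simp
      finally have "K * (s-t)^2 \<le> \<delta> * \<bar>s - t\<bar>" .
      thus "f t + p * (s - t) + 2 * K / 2 * (s - t)\<^sup>2 \<le> f s" using bnd[OF sin] by simp
    qed
    hence "p^2 * (2*K) \<le> c" by (rule sup)
    thus False using c p by (simp add: K_def)
  qed
  have mono1: "v s \<le> sl f s t" if "a < s" "s < t" "t < b" for s t
  proof -
    have "sl f s t \<in> R s" using that unfolding R_def by auto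
    thus ?thesis unfolding v_def using bddR[of s] that by (auto intro: cInf_lower)
  qed
  have mono2: "sl f s t \<le> v t" if "a < s" "s < t" "t < b" for s t
  proof -
    have "sl f s t \<in> Lf t" using that unfolding Lf_def by auto
    hence "sl f s t \<le> Sup (Lf t)" using bddL[of t] that by (auto intro: cSup_upper)
    thus ?thesis using eq[of t] that by (simp add: v_def)
  qed
  have deriv: "(f has_real_derivative v t) (at t)" if t: "t \<in> {a<..<b}" for t
  proof -
    have "((\<lambda>s. (f s - f t) / (s - t)) \<longlongrightarrow> v t) (at t)"
    proof (rule tendstoI)
      fix e :: real assume e: "e > 0"
      have "Inf (R t) < v t + e" using e by (simp add: v_def)
      then obtain r where r: "r \<in> R t" "r < v t + e" using cInf_less_iff[OF Rne(1)[OF t] bddR[OF t]] by auto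
      then obtain s1 where s1: "t < s1" "s1 < b" "sl f t s1 < v t + e" unfolding R_def by auto
      have "Sup (Lf t) > v t - e" using e eq[OF t] by (simp add: v_def)
      then obtain l where l: "l \<in> Lf t" "l > v t - e" using less_cSup_iff[OF Rne(2)[OF t] bddL[OF t]] by auto
      then obtain s0 where s0: "a < s0" "s0 < t" "sl f s0 t > v t - e" unfolding Lf_def by auto
      show "\<forall>\<^sub>F s in at t. dist ((f s - f t) / (s - t)) (v t) < e"
        unfolding eventually_at
      proof (intro exI[of _ "min (s1 - t) (t - s0)"] conjI ballI impI)
        show "min (s1 - t) (t - s0) > 0" using s1 s0 by auto
        fix s assume s: "s \<noteq> t \<and> dist s t < min (s1 - t) (t - s0)"
        have q: "(f s - f t) / (s - t) = sl f t s" by (simp add: sl_def)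
        show "dist ((f s - f t) / (s - t)) (v t) < e"
        proof (cases "s < t")
          case True
          have "sl f s0 t \<le> sl f s t" using cvx_sl(2)[OF cv, of s0 s t] s0 s True t by (auto simp: dist_real_def)
          moreover have "sl f s t \<le> v t" using mono2[of s t] s0 s True t by (auto simp: dist_real_def)
          ultimately show ?thesis using s0 q by (auto simp: dist_real_def sl_sym)
        next
          case False
          hence st: "t < s" using s by auto
          have "sl f t s \<le> sl f t s1" using cvx_sl(1)[OF cv, of t s s1] s1 s st t by (auto simp: dist_real_def)
          moreover have "v t \<le> sl f t s" using mono1[of t s] s1 s st t by (auto simp: dist_real_def)
          ultimately show ?thesis using s1 q by (auto simp: dist_real_def)
        qed
      qed
    qed
    thus ?thesis by (simp add: has_field_derivative_iff)
  qed
  have isc: "isCont v t" if t: "t \<in> {a<..<b}" for t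
    unfolding continuous_at_eps_delta
  proof (intro allI impI)
    fix e :: real assume e: "e > 0"
    have fc: "isCont f x" if "x \<in> {a<..<b}" for x
      using cont that by (simp add: continuous_on_eq_continuous_at)
    have "Inf (R t) < v t + e" using e by (simp add: v_def)
    then obtain r where r: "r \<in> R t" "r < v t + e" using cInf_less_iff[OF Rne(1)[OF t] bddR[OF t]] by auto
    then obtain t2 where t2: "t < t2" "t2 < b" "sl f t t2 < v t + e" unfolding R_def by auto
    have "Sup (Lf t) > v t - e" using e eq[OF t] by (simp add: v_def)
    then obtain l where l: "l \<in> Lf t" "l > v t - e" using less_cSup_iff[OF Rne(2)[OF t] bddL[OF t]] by auto
    then obtain t0 where t0: "a < t0" "t0 < t" "sl f t0 t > v t - e" unfolding Lf_def by auto
    have c2: "isCont (\<lambda>s. sl f s t2) t" unfolding sl_def using fc[OF t] t2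
      by (intro continuous_intros) auto
    have c0: "isCont (\<lambda>s. sl f t0 s) t" unfolding sl_def using fc[OF t] t0
      by (intro continuous_intros) auto
    obtain d2 where d2: "d2 > 0" "\<And>s. dist s t < d2 \<Longrightarrow> dist (sl f s t2) (sl f t t2) < v t + e - sl f t t2"
      using c2[unfolded continuous_at_eps_delta] t2 by (meson diff_gt_0_iff_gt)
    obtain d0 where d0: "d0 > 0" "\<And>s. dist s t < d0 \<Longrightarrow> dist (sl f t0 s) (sl f t0 t) < sl f t0 t - (v t - e)"
      using c0[unfolded continuous_at_eps_delta] t0 by (meson diff_gt_0_iff_gt)
    show "\<exists>d>0. \<forall>s. dist s t < d \<longrightarrow> dist (v s) (v t) < e"
    proof (intro exI[of _ "min (min d2 d0) (min (t2 - t) (t - t0))"] conjI allI impI)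
      show "min (min d2 d0) (min (t2 - t) (t - t0)) > 0" using d2 d0 t2 t0 by auto
      fix s assume s: "dist s t < min (min d2 d0) (min (t2 - t) (t - t0))"
      hence sd: "dist s t < d2" "dist s t < d0" "t0 < s" "s < t2" by (auto simp: dist_real_def)
      show "dist (v s) (v t) < e"
      proof (cases s t rule: linorder_cases)
        case less
        have "v s \<ge> sl f t0 s" using mono2[of t0 s] t0 less t sd by auto
        moreover have "v s \<le> v t" using mono1[of s t] mono2[of s t] less sd t t0 by auto
        ultimately show ?thesis using d0(2)[OF sd(2)] by (auto simp: dist_real_def)
      next
        case equal thus ?thesis using e by simp
      next
        case greater
        have "v s \<le> sl f s t2" using mono1[of s t2] t2 greater sd t t0 by auto
        moreover have "v t \<le> v s" using mono1[of t s] mono2[of t s] greater sd t t2 by auto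
        ultimately show ?thesis using d2(2)[OF sd(1)] by (auto simp: dist_real_def)
      qed
    qed
  qed
  show ?thesis
    apply (rule exI[of _ v])
    using deriv mono1 mono2 isc by blast
qed

lemma root3_cube [simp]: "root 3 y ^ 3 = (y::real)"
  by (simp add: odd_real_root_pow)

lemma root3_eq0: "root 3 y = 0 \<longleftrightarrow> (y::real) = 0" by simp

lemma deriv_rho:
  assumes "A + 3*k* s \<noteq> 0"
  shows "((\<lambda>s. root 3 (A + 3*k* s)) has_real_derivative (k / root 3 (A + 3*k* s) ^ 2)) (at s)"
proof -
  have d: "(root 3 has_real_derivative inverse (real 3 * root 3 (A + 3*k* s) ^ (3 - Suc 0))) (at (A + 3*k* s))"
    by (rule DERIV_real_root_generic) (use assms in auto)
  have "((\<lambda>s. root 3 (A + 3*k* s)) has_real_derivative inverse (real 3 * root 3 (A + 3*k* s) ^ (3 - Suc 0)) * (3*k)) (at s)"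
    by (rule DERIV_chain2[where f="root 3" and g="\<lambda>s. A + 3 * k * s", OF d]) (auto intro!: derivative_eq_intros)
  moreover have "inverse (real 3 * root 3 (A + 3*k* s) ^ (3 - Suc 0)) * (3*k) = k / root 3 (A + 3*k* s) ^ 2"
    by (simp add: field_simps power2_eq_square)
  ultimately show ?thesis by simp
qed

lemma deriv_W:
  assumes "A + 3*k* s \<noteq> 0" "k \<noteq> 0"
  shows "((\<lambda>s. root 3 (A + 3*k* s) ^ 4 / (4*k)) has_real_derivative root 3 (A + 3*k* s)) (at s)"
proof -
  let ?r = "root 3 (A + 3*k* s)"
  have r0: "?r \<noteq> 0" using assms by simp
  have "((\<lambda>s. root 3 (A + 3*k* s) ^ 4 / (4*k)) has_real_derivative (of_nat 4 * ((k / ?r^2) * ?r ^ (4 - Suc 0))) / (4*k)) (at s)"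
    by (rule DERIV_cdivide, rule DERIV_power[OF deriv_rho[OF assms(1)]])
  moreover have "(of_nat 4 * ((k / ?r^2) * ?r ^ (4 - Suc 0))) / (4*k) = ?r"
    using r0 assms(2) by (simp add: field_simps power2_eq_square power3_eq_cube)
  ultimately show ?thesis by simp
qed

lemma W_touch:
  fixes k A t \<delta> :: real
  defines "\<rho> \<equiv> \<lambda>s. root 3 (A + 3*k* s)"
  defines "W \<equiv> \<lambda>s. \<rho> s ^ 4 / (4*k)"
  assumes k: "k \<noteq> 0" and y: "A + 3*k*t \<noteq> 0" and d: "\<delta> > 0"
  shows "\<exists>\<eta>>0. \<forall>s. \<bar>s - t\<bar> < \<eta> \<longrightarrow>
     W s \<le> W t + \<rho> t * (s-t) + (k / \<rho> t ^2 + 2*\<delta>)/2 * (s-t)^2 \<and>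
     W s \<ge> W t + \<rho> t * (s-t) + (k / \<rho> t ^2 - 2*\<delta>)/2 * (s-t)^2"
proof -
  have cy: "isCont (\<lambda>s. A + 3*k* s) t" by (intro continuous_intros)
  obtain \<eta>0 where e0: "\<eta>0 > 0" "\<And>s. dist s t < \<eta>0 \<Longrightarrow> dist (A + 3*k* s) (A + 3*k*t) < \<bar>A + 3*k*t\<bar>"
    using cy[unfolded continuous_at_eps_delta] y by (meson zero_less_abs_iff)
  have ynz: "A + 3*k* s \<noteq> 0" if "dist s t < \<eta>0" for s
    using e0(2)[OF that] by (auto simp: dist_real_def)
  have cq: "isCont (\<lambda>s. k / \<rho> s ^ 2) t" unfolding \<rho>_def using y
    by (intro continuous_intros isCont_o2[OF _ isCont_real_root]) auto
  obtain \<eta>1 where e1: "\<eta>1 > 0" "\<And>s. dist s t < \<eta>1 \<Longrightarrow> dist (k / \<rho> s ^ 2) (k / \<rho> t ^ 2) < 2*\<delta>"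
    using cq[unfolded continuous_at_eps_delta] d by (meson mult_pos_pos zero_less_numeral)
  define \<eta> where "\<eta> = min \<eta>0 \<eta>1 / 2"
  have eta: "\<eta> > 0" "\<eta> < \<eta>0" "\<eta> < \<eta>1" using e0 e1 by (auto simp: \<eta>_def min_def)
  define diff where "diff m = (if m = 0 then W else if m = 1 then \<rho> else (\<lambda>s. k / \<rho> s ^ 2))" for m :: nat
  have D: "\<forall>m s. m < 2 \<and> t - \<eta> \<le> s \<and> s \<le> t + \<eta> \<longrightarrow> (diff m has_real_derivative diff (Suc m) s) (at s)"
  proof (intro allI impI)
    fix m :: nat and s :: real assume ms: "m < 2 \<and> t - \<eta> \<le> s \<and> s \<le> t + \<eta>"
    hence "dist s t < \<eta>0" using eta by (auto simp: dist_real_def)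
    hence yy: "A + 3*k* s \<noteq> 0" by (rule ynz)
    show "(diff m has_real_derivative diff (Suc m) s) (at s)"
    proof (cases "m = 0")
      case True thus ?thesis using deriv_W[OF yy k] by (simp add: diff_def W_def \<rho>_def)
    next
      case False hence "m = 1" using ms by auto
      thus ?thesis using deriv_rho[OF yy] by (simp add: diff_def \<rho>_def)
    qed
  qed
  show ?thesis
  proof (intro exI[of _ \<eta>] conjI allI impI)
    show "\<eta> > 0" by (rule eta)
    fix s assume s: "\<bar>s - t\<bar> < \<eta>"
    have "W s \<le> W t + \<rho> t * (s-t) + (k / \<rho> t ^2 + 2*\<delta>)/2 * (s-t)^2 \<and>
     W s \<ge> W t + \<rho> t * (s-t) + (k / \<rho> t ^2 - 2*\<delta>)/2 * (s-t)^2"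
    proof (cases "s = t")
      case True thus ?thesis by simp
    next
      case False
      have d0: "diff 0 = W" by (simp add: diff_def)
      have "\<exists>\<xi>. (if s < t then s < \<xi> \<and> \<xi> < t else t < \<xi> \<and> \<xi> < s) \<and>
        W s = (\<Sum>m<2. (diff m t / fact m) * (s - t)^m) + (diff 2 \<xi> / fact 2) * (s - t)^2"
        by (rule Taylor[of 2 diff W "t - \<eta>" "t + \<eta>" t s]) (use d0 D s False eta in auto)
      then obtain \<xi> where xi: "(if s < t then s < \<xi> \<and> \<xi> < t else t < \<xi> \<and> \<xi> < s)"
        "W s = (\<Sum>m<2. (diff m t / fact m) * (s - t)^m) + (diff 2 \<xi> / fact 2) * (s - t)^2" by blast
      have "dist \<xi> t < \<eta>1" using xi(1) s eta by (auto simp: dist_real_def split: if_splits)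
      hence q: "\<bar>k / \<rho> \<xi> ^ 2 - k / \<rho> t ^ 2\<bar> < 2*\<delta>" using e1(2) by (simp add: dist_real_def)
      have Ws: "W s = W t + \<rho> t * (s - t) + (k / \<rho> \<xi> ^ 2)/2 * (s-t)^2"
        using xi(2) by (simp add: diff_def numeral_2_eq_2)
      have sq: "(s-t)^2 \<ge> 0" by simp
      have "(k / \<rho> \<xi> ^ 2)/2 * (s-t)^2 \<le> (k / \<rho> t ^2 + 2*\<delta>)/2 * (s-t)^2"
        by (rule mult_right_mono[OF _ sq]) (use q in auto)
      moreover have "(k / \<rho> \<xi> ^ 2)/2 * (s-t)^2 \<ge> (k / \<rho> t ^2 - 2*\<delta>)/2 * (s-t)^2"
        by (rule mult_right_mono[OF _ sq]) (use q in auto)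
      ultimately show ?thesis using Ws by simp
    qed
    thus "W s \<le> W t + \<rho> t * (s-t) + (k / \<rho> t ^2 + 2*\<delta>)/2 * (s-t)^2"
      "W s \<ge> W t + \<rho> t * (s-t) + (k / \<rho> t ^2 - 2*\<delta>)/2 * (s-t)^2" by auto
  qed
qed

lemma cmp_gen:
  fixes f v :: "real \<Rightarrow> real" and k A s0 t0 :: real
  assumes dv: "\<And>s. s \<in> {s0..t0} \<Longrightarrow> (f has_real_derivative v s) (at s)"
    and st: "s0 < t0" "a < s0" "t0 < b" and k: "k \<noteq> 0"
    and nz: "\<And>s. s \<in> {s0..t0} \<Longrightarrow> A + 3 * k * s \<noteq> 0"
    and v0: "v s0 > root 3 (A + 3 * k * s0)" and v1: "v t0 < root 3 (A + 3 * k * t0)"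
  shows "\<exists>t\<in>{s0<..<t0}. \<forall>\<delta>>0. utouch f {a<..<b} t (root 3 (A + 3 * k * t))
            (k / root 3 (A + 3 * k * t) ^ 2 + 2*\<delta>)"
proof -
  define \<rho> where "\<rho> s = root 3 (A + 3 * k * s)" for s
  define W where "W s = \<rho> s ^ 4 / (4*k)" for s
  define h where "h s = f s - W s" for s
  have dh: "(h has_real_derivative (v s - \<rho> s)) (at s)" if "s \<in> {s0..t0}" for s
    unfolding h_def W_def \<rho>_def
    by (rule DERIV_diff[OF dv[OF that] deriv_W[OF nz[OF that] k]])
  have ch: "continuous_on {s0..t0} h"
    using dh by (meson DERIV_isCont continuous_at_imp_continuous_on)
  obtain t where t: "t \<in> {s0..t0}" "\<And>s. s \<in> {s0..t0} \<Longrightarrow> h s \<le> h t"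
    using continuous_attains_sup[OF compact_Icc _ ch] st by auto
  have "t \<noteq> s0"
  proof
    assume "t = s0"
    obtain d where d: "d > 0" "\<And>e. e > 0 \<Longrightarrow> e < d \<Longrightarrow> h s0 < h (s0 + e)"
      using DERIV_pos_inc_right[OF dh[of s0]] v0 st by (auto simp: \<rho>_def)
    define e where "e = min (d/2) (t0 - s0)"
    have e: "e > 0" "e < d" "s0 + e \<in> {s0..t0}" using d st by (auto simp: e_def min_def)
    have "h s0 < h (s0 + e)" using d(2) e by blast
    moreover have "h (s0 + e) \<le> h s0" using t(2)[OF e(3)] \<open>t = s0\<close> by simp
    ultimately show False by simp
  qed
  moreover have "t \<noteq> t0"
  proof
    assume "t = t0"
    obtain d where d: "d > 0" "\<And>e. e > 0 \<Longrightarrow> e < d \<Longrightarrow> h t0 < h (t0 - e)"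
      using DERIV_neg_dec_left[OF dh[of t0]] v1 st by (auto simp: \<rho>_def)
    define e where "e = min (d/2) (t0 - s0)"
    have e: "e > 0" "e < d" "t0 - e \<in> {s0..t0}" using d st by (auto simp: e_def min_def)
    have "h t0 < h (t0 - e)" using d(2) e by blast
    moreover have "h (t0 - e) \<le> h t0" using t(2)[OF e(3)] \<open>t = t0\<close> by simp
    ultimately show False by simp
  qed
  ultimately have tin: "t \<in> {s0<..<t0}" using t by auto
  show ?thesis
  proof (intro bexI[OF _ tin] allI impI)
    fix \<delta> :: real assume d: "\<delta> > 0"
    obtain \<eta> where eta: "\<eta> > 0" "\<And>s. \<bar>s - t\<bar> < \<eta> \<Longrightarrow>
        W s \<le> W t + \<rho> t * (s-t) + (k / \<rho> t ^2 + 2*\<delta>)/2 * (s-t)^2"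
      using W_touch[OF k nz[of t] d] t unfolding W_def \<rho>_def by blast
    show "utouch f {a<..<b} t (root 3 (A + 3 * k * t)) (k / root 3 (A + 3 * k * t) ^ 2 + 2*\<delta>)"
      unfolding utouch_def
    proof (intro conjI exI[of _ "min \<eta> (min (t - s0) (t0 - t))"] allI impI)
      show "t \<in> {a<..<b}" using tin st by auto
      show "min \<eta> (min (t - s0) (t0 - t)) > 0" using eta tin by auto
      fix s assume s: "\<bar>s - t\<bar> < min \<eta> (min (t - s0) (t0 - t))"
      hence sin: "s \<in> {s0..t0}" by auto
      thus "s \<in> {a<..<b}" using st by auto
      have "h s \<le> h t" using t sin by auto
      moreover have "W s \<le> W t + \<rho> t * (s-t) + (k / \<rho> t ^2 + 2*\<delta>)/2 * (s-t)^2" using eta s by auto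
      ultimately show "f s \<le> f t + root 3 (A + 3 * k * t) * (s - t) +
          (k / root 3 (A + 3 * k * t) ^ 2 + 2*\<delta>) / 2 * (s - t)^2"
        unfolding h_def \<rho>_def by simp
    qed
  qed
qed

lemma interp:
  fixes P Q s0 t0 :: real
  assumes st: "s0 < t0" and PQ: "P*Q > 0"
  shows "(P - 3 * ((Q-P)/(3*(t0-s0))) * s0) + 3 * ((Q-P)/(3*(t0-s0))) * s0 = P"
    "(P - 3 * ((Q-P)/(3*(t0-s0))) * s0) + 3 * ((Q-P)/(3*(t0-s0))) * t0 = Q"
    "\<And>s. s \<in> {s0..t0} \<Longrightarrow> (P - 3 * ((Q-P)/(3*(t0-s0))) * s0) + 3 * ((Q-P)/(3*(t0-s0))) * s \<noteq> 0"
proof -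
  have d: "t0 - s0 \<noteq> 0" using st by simp
  show "(P - 3 * ((Q-P)/(3*(t0-s0))) * s0) + 3 * ((Q-P)/(3*(t0-s0))) * s0 = P" by simp
  have d3: "3*t0 - 3* s0 \<noteq> 0" using st by simp
  define k where "k = (Q-P)/(3*(t0-s0))"
  have h: "3 * k * (t0 - s0) = Q - P" using d3 unfolding k_def by (simp add: field_simps)
  have h2: "3 * k * t0 - 3 * k * s0 = Q - P" using h by (simp add: right_diff_distrib)
  show "(P - 3 * ((Q-P)/(3*(t0-s0))) * s0) + 3 * ((Q-P)/(3*(t0-s0))) * t0 = Q"
    unfolding k_def[symmetric] using h2 by linarith
  fix s assume s: "s \<in> {s0..t0}"
  have "((P - 3 * k * s0) + 3 * k * s) * (t0 - s0) = P*(t0-s0) + (3 * k * (t0-s0))*(s-s0)"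
    by (simp add: algebra_simps)
  also have "\<dots> = P*(t0-s0) + (Q-P)*(s-s0)" using h by simp
  also have "\<dots> = (t0 - s)*P + (s - s0)*Q" by (simp add: algebra_simps)
  finally have e: "((P - 3 * k * s0) + 3 * k * s) * (t0 - s0) = (t0 - s)*P + (s - s0)*Q" .
  have w: "t0 - s \<ge> 0" "s - s0 \<ge> 0" "t0 - s > 0 \<or> s - s0 > 0" using s st by auto
  have "(t0 - s)*P + (s - s0)*Q \<noteq> 0"
  proof (cases "P > 0")
    case True
    hence Q: "Q > 0" using PQ zero_less_mult_pos by blast
    have "(t0 - s)*P \<ge> 0" "(s - s0)*Q \<ge> 0" using w True Q by auto
    moreover have "(t0 - s)*P > 0 \<or> (s - s0)*Q > 0" using w True Q by auto
    ultimately show ?thesis by linarith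
  next
    case False
    hence P: "P < 0" using PQ by (cases "P = 0") auto
    hence Q: "Q < 0" using PQ by (simp add: zero_less_mult_iff)
    have "(t0 - s)*P \<le> 0" "(s - s0)*Q \<le> 0" using w P Q by (auto simp: mult_nonneg_nonpos)
    moreover have "(t0 - s)*P < 0 \<or> (s - s0)*Q < 0" using w P Q by (auto simp: mult_pos_neg)
    ultimately show ?thesis by linarith
  qed
  thus "(P - 3 * ((Q-P)/(3*(t0-s0))) * s0) + 3 * ((Q-P)/(3*(t0-s0))) * s \<noteq> 0"
    unfolding k_def[symmetric] using e by auto
qed

lemma root3_less_cube: "root 3 P < v \<longleftrightarrow> P < v^3"
  by (metis odd_real_root_power_cancel odd_numeral real_root_less_iff zero_less_numeral)

lemma cube_less_root3: "v < root 3 P \<longleftrightarrow> v^3 < P"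
  by (metis odd_real_root_power_cancel odd_numeral real_root_less_iff zero_less_numeral)

lemma cube_mono_le: "(x::real) \<le> y \<Longrightarrow> x^3 \<le> y^3"
  by (simp add: power_mono_odd)

lemma glue_left:
  fixes G :: "real \<Rightarrow> real"
  assumes "isCont G z" "s < z" "\<And>s'. s \<le> s' \<Longrightarrow> s' < z \<Longrightarrow> G s' = G s"
  shows "G z = G s"
proof (rule ccontr)
  assume ne: "G z \<noteq> G s"
  have pos: "\<bar>G z - G s\<bar> > 0" using ne by simp
  obtain d where d: "d > 0" "\<And>x. dist x z < d \<Longrightarrow> dist (G x) (G z) < \<bar>G z - G s\<bar>"
    using assms(1)[unfolded continuous_at_eps_delta] pos by blast
  define s' where "s' = z - min d (z - s)/2"
  have "s \<le> s'" "s' < z" "dist s' z < d" using d assms(2) by (auto simp: s'_def dist_real_def min_def field_simps)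
  thus False using d(2)[of s'] assms(3)[of s'] by (auto simp: dist_real_def abs_minus_commute)
qed

lemma glue_right:
  fixes G :: "real \<Rightarrow> real"
  assumes "isCont G z" "z < t" "\<And>t'. z < t' \<Longrightarrow> t' \<le> t \<Longrightarrow> G t' = G t"
  shows "G z = G t"
proof (rule ccontr)
  assume ne: "G z \<noteq> G t"
  have pos: "\<bar>G z - G t\<bar> > 0" using ne by simp
  obtain d where d: "d > 0" "\<And>x. dist x z < d \<Longrightarrow> dist (G x) (G z) < \<bar>G z - G t\<bar>"
    using assms(1)[unfolded continuous_at_eps_delta] pos by blast
  define t' where "t' = z + min d (t - z)/2"
  have "z < t'" "t' \<le> t" "dist t' z < d" using d assms(2) by (auto simp: t'_def dist_real_def min_def field_simps)
  thus False using d(2)[of t'] assms(3)[of t'] by (auto simp: dist_real_def abs_minus_commute)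
qed

lemma T1pos:
  fixes f :: "real \<Rightarrow> real"
  assumes cont: "continuous_on {a<..<b} f" and ab: "a < b" and c: "c > 0"
    and sub: "\<And>t p X. utouch f {a<..<b} t p X \<Longrightarrow> c \<le> p^2*X"
    and sup: "\<And>t p X. ltouch f {a<..<b} t p X \<Longrightarrow> p^2*X \<le> c"
  shows "\<exists>v K. \<forall>s\<in>{a<..<b}. (f has_real_derivative v s) (at s) \<and> v s ^ 3 = K + 3*c* s"
proof -
  have sub0: "0 \<le> p^2*X" if "utouch f {a<..<b} t p X" for t p X
    using sub[OF that] c by linarith
  have cv: "cvx f a b" unfolding cvx_def
    by (intro allI impI, rule sub0_convex[OF cont]) (auto intro: sub0)
  obtain v where dv: "\<forall>s\<in>{a<..<b}. (f has_real_derivative v s) (at s)"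
    and mn: "\<forall>s t. a < s \<longrightarrow> s < t \<longrightarrow> t < b \<longrightarrow> v s \<le> sl f s t \<and> sl f s t \<le> v t"
    and vc: "\<forall>s\<in>{a<..<b}. isCont v s"
  proof -
    have "\<exists>v. (\<forall>s\<in>{a<..<b}. (f has_real_derivative v s) (at s)) \<and>
             (\<forall>s t. a < s \<longrightarrow> s < t \<longrightarrow> t < b \<longrightarrow> v s \<le> sl f s t \<and> sl f s t \<le> v t) \<and>
             (\<forall>s\<in>{a<..<b}. isCont v s)"
      by (rule cvx_deriv[OF cont cv c]) (rule sup)
    thus ?thesis using that by blast
  qed
  have mono: "v s \<le> v t" if "a < s" "s \<le> t" "t < b" for s t
  proof (cases "s = t")
    case False thus ?thesis using mn that by (meson order.trans order_le_less)
  qed simp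
  have sgn: "v s0 * v t0 > 0" if st: "a < s0" "s0 < t0" "t0 < b" and nz: "\<And>s. s\<in>{s0..t0} \<Longrightarrow> v s \<noteq> 0" for s0 t0
  proof (rule ccontr)
    assume "\<not> ?thesis"
    hence "v s0 * v t0 \<le> 0" by simp
    moreover have "v s0 \<noteq> 0" "v t0 \<noteq> 0" using nz st by auto
    moreover have "v s0 \<le> v t0" using mono st by auto
    ultimately have ng: "v s0 < 0" "0 < v t0"
      by (smt (verit) mult_pos_pos mult_neg_neg)+
    have ic: "\<forall>x. s0 \<le> x \<and> x \<le> t0 \<longrightarrow> isCont v x" using vc st by auto
    obtain x where "s0 \<le> x" "x \<le> t0" "v x = 0"
      using IVT[of v s0 0 t0, OF _ _ _ ic] ng st by auto
    thus False using nz by auto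
  qed
  have cmp1: "v t0^3 - v s0^3 \<ge> 3*c*(t0-s0)"
    if st: "a < s0" "s0 < t0" "t0 < b" and nz: "\<And>s. s\<in>{s0..t0} \<Longrightarrow> v s \<noteq> 0" for s0 t0
  proof (rule ccontr)
    assume H: "\<not> ?thesis"
    define g where "g = 3*c*(t0-s0) - (v t0^3 - v s0^3)"
    have g: "g > 0" using H by (simp add: g_def)
    have sg: "v s0 * v t0 > 0" by (rule sgn[OF st nz])
    define m where "m = min \<bar>v s0^3\<bar> \<bar>v t0^3\<bar>"
    have m: "m > 0" using nz st by (auto simp: m_def)
    define \<epsilon> where "\<epsilon> = min m g / 3"
    have e3: "3*\<epsilon> = min m g" by (simp add: \<epsilon>_def)
    have ep: "\<epsilon> > 0" "\<epsilon> < m" "2*\<epsilon> < g" using e3 m g by (auto simp: min_def split: if_splits)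
    define P where "P = v s0^3 - \<epsilon>"
    define Q where "Q = v t0^3 + \<epsilon>"
    have PQ: "P*Q > 0"
    proof (cases "v s0 > 0")
      case True
      hence t: "v t0 > 0" using sg by (simp add: zero_less_mult_iff)
      have "P > 0" using ep True unfolding P_def m_def by (auto simp: min_def split: if_splits)
      moreover have "Q > 0" using ep zero_less_power[OF t, of 3] unfolding Q_def by linarith
      ultimately show ?thesis by simp
    next
      case False
      hence f: "v s0 < 0" using nz st by force
      hence t: "v t0 < 0" using sg by (simp add: zero_less_mult_iff)
      have "v s0^3 < 0" using f by (simp add: power_less_zero_eq)
      hence "P < 0" using ep unfolding P_def by linarith
      moreover have "v t0^3 < 0" using t by (simp add: power_less_zero_eq)
      hence "Q < 0" using ep unfolding Q_def m_def by (auto simp: min_def split: if_splits)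
      ultimately show ?thesis by (simp add: mult_neg_neg)
    qed
    define k where "k = (Q-P)/(3*(t0-s0))"
    define A where "A = P - 3 * k * s0"
    have i1: "A + 3 * k * s0 = P" and i2: "A + 3 * k * t0 = Q" and i3: "\<And>s. s \<in> {s0..t0} \<Longrightarrow> A + 3 * k * s \<noteq> 0"
      using interp[OF st(2) PQ] unfolding A_def k_def by auto
    have kk: "k * (3*(t0-s0)) = Q - P" using st by (simp add: k_def)
    have "v s0^3 \<le> v t0^3" using mono st by (simp add: cube_mono_le)
    hence "Q - P > 0" using ep by (simp add: P_def Q_def)
    moreover have "3*(t0-s0) > 0" using st by simp
    ultimately have k0: "k > 0" using kk by (metis zero_less_mult_pos2)
    have "Q - P < 3*c*(t0-s0)" using ep by (simp add: P_def Q_def g_def)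
    moreover have cc: "c * (3*(t0-s0)) = 3*c*(t0-s0)" by (simp add: algebra_simps)
    ultimately have "k * (3*(t0-s0)) < c * (3*(t0-s0))" using kk by linarith
    hence kc: "k < c" using st by (simp add: mult_less_cancel_right)
    have v0: "v s0 > root 3 (A + 3 * k * s0)" using i1 ep by (simp add: root3_less_cube P_def)
    have v1: "v t0 < root 3 (A + 3 * k * t0)" using i2 ep by (simp add: cube_less_root3 Q_def)
    have dv': "\<And>s. s \<in> {s0..t0} \<Longrightarrow> (f has_real_derivative v s) (at s)" using dv st by auto
    obtain t where t: "t \<in> {s0<..<t0}" and tt: "\<And>\<delta>. \<delta> > 0 \<Longrightarrow> utouch f {a<..<b} t (root 3 (A + 3 * k * t))
            (k / root 3 (A + 3 * k * t) ^ 2 + 2*\<delta>)"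
      using cmp_gen[OF dv' st(2) st(1) st(3) _ i3 v0 v1] k0 by auto
    define r where "r = root 3 (A + 3 * k * t)"
    have r0: "r \<noteq> 0" using i3[of t] t by (simp add: r_def)
    hence r2: "r^2 > 0" by simp
    define \<delta> where "\<delta> = (c - k)/(4*r^2)"
    have d0: "\<delta> > 0" using kc r2 by (simp add: \<delta>_def)
    have "c \<le> r^2 * (k / r^2 + 2*\<delta>)" using sub[OF tt[OF d0]] by (simp add: r_def)
    also have "\<dots> = k + (c - k)/2" using r2 by (simp add: \<delta>_def field_simps)
    finally have "c \<le> k + (c - k)/2" .
    moreover have "k + (c - k)/2 < c" using kc by (simp add: field_simps)
    ultimately show False by linarith
  qed
  have cmp2: "v t0^3 - v s0^3 \<le> 3*c*(t0-s0)"
    if st: "a < s0" "s0 < t0" "t0 < b" and nz: "\<And>s. s\<in>{s0..t0} \<Longrightarrow> v s \<noteq> 0" for s0 t0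
  proof (rule ccontr)
    assume H: "\<not> ?thesis"
    define g where "g = (v t0^3 - v s0^3) - 3*c*(t0-s0)"
    have g: "g > 0" using H by (simp add: g_def)
    have sg: "v s0 * v t0 > 0" by (rule sgn[OF st nz])
    define m where "m = min \<bar>v s0^3\<bar> \<bar>v t0^3\<bar>"
    have m: "m > 0" using nz st by (auto simp: m_def)
    define \<epsilon> where "\<epsilon> = min m g / 3"
    have e3: "3*\<epsilon> = min m g" by (simp add: \<epsilon>_def)
    have ep: "\<epsilon> > 0" "\<epsilon> < m" "2*\<epsilon> < g" using e3 m g by (auto simp: min_def split: if_splits)
    define P where "P = v s0^3 + \<epsilon>"
    define Q where "Q = v t0^3 - \<epsilon>"
    have PQ: "P*Q > 0"
    proof (cases "v s0 > 0")
      case True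
      hence t: "v t0 > 0" using sg by (simp add: zero_less_mult_iff)
      have "P > 0" using ep zero_less_power[OF True, of 3] unfolding P_def by linarith
      moreover have "Q > 0" using ep t unfolding Q_def m_def by (auto simp: min_def split: if_splits)
      ultimately show ?thesis by simp
    next
      case False
      hence f: "v s0 < 0" using nz st by force
      hence t: "v t0 < 0" using sg by (simp add: zero_less_mult_iff)
      have "v s0^3 < 0" using f by (simp add: power_less_zero_eq)
      hence "P < 0" using ep unfolding P_def m_def by (auto simp: min_def split: if_splits)
      moreover have "v t0^3 < 0" using t by (simp add: power_less_zero_eq)
      hence "Q < 0" using ep unfolding Q_def by linarith
      ultimately show ?thesis by (simp add: mult_neg_neg)
    qed
    define k where "k = (Q-P)/(3*(t0-s0))"
    define A where "A = P - 3 * k * s0"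
    have i1: "A + 3 * k * s0 = P" and i2: "A + 3 * k * t0 = Q" and i3: "\<And>s. s \<in> {s0..t0} \<Longrightarrow> A + 3 * k * s \<noteq> 0"
      using interp[OF st(2) PQ] unfolding A_def k_def by auto
    have kk: "k * (3*(t0-s0)) = Q - P" using st by (simp add: k_def)
    have "Q - P > 3*c*(t0-s0)" using ep by (simp add: P_def Q_def g_def)
    moreover have cc: "c * (3*(t0-s0)) = 3*c*(t0-s0)" by (simp add: algebra_simps)
    ultimately have "k * (3*(t0-s0)) > c * (3*(t0-s0))" using kk by linarith
    hence kc: "k > c" using st by (simp add: mult_less_cancel_right)
    have neg: "(-A) + 3 * (-k) * s = -(A + 3 * k * s)" for s by simp
    have i3': "(-A) + 3 * (-k) * s \<noteq> 0" if "s \<in> {s0..t0}" for s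
      unfolding neg using i3[OF that] by (simp only: neg_equal_0_iff_equal not_False_eq_True)
    have rm: "root 3 ((-A) + 3 * (-k) * s) = - root 3 (A + 3 * k * s)" for s
      unfolding neg by (rule real_root_minus)
    have v0: "- v s0 > root 3 ((-A) + 3 * (-k) * s0)" unfolding rm using i1 ep
      by (simp add: cube_less_root3 P_def)
    have v1: "- v t0 < root 3 ((-A) + 3 * (-k) * t0)" unfolding rm using i2 ep
      by (simp add: root3_less_cube Q_def)
    have dv': "\<And>s. s \<in> {s0..t0} \<Longrightarrow> ((\<lambda>s. - f s) has_real_derivative - v s) (at s)"
      using dv st by (auto intro!: derivative_intros)
    obtain t where t: "t \<in> {s0<..<t0}" and tt: "\<And>\<delta>. \<delta> > 0 \<Longrightarrow> utouch (\<lambda>s. - f s) {a<..<b} t (root 3 ((-A) + 3 * (-k) * t))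
            ((-k) / root 3 ((-A) + 3 * (-k) * t) ^ 2 + 2*\<delta>)"
      using cmp_gen[OF dv' st(2) st(1) st(3) _ i3' v0 v1] kc c by auto
    define r where "r = root 3 (A + 3 * k * t)"
    have r0: "r \<noteq> 0" using i3[of t] t by (simp add: r_def)
    hence r2: "r^2 > 0" by simp
    define \<delta> where "\<delta> = (k - c)/(4*r^2)"
    have d0: "\<delta> > 0" using kc r2 by (simp add: \<delta>_def)
    have "utouch (\<lambda>s. - f s) {a<..<b} t (- r) (- (k / r^2 - 2*\<delta>))"
      using tt[OF d0] unfolding rm r_def by (simp add: algebra_simps)
    hence "ltouch f {a<..<b} t r (k / r^2 - 2*\<delta>)" by (simp add: ltouch_neg)
    hence "r^2 * (k / r^2 - 2*\<delta>) \<le> c" by (rule sup)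
    moreover have "r^2 * (k / r^2 - 2*\<delta>) = k - (k - c)/2" using r2 by (simp add: \<delta>_def field_simps)
    moreover have "k - (k - c)/2 > c" using kc by (simp add: field_simps)
    ultimately show False by linarith
  qed
  define G where "G s = v s^3 - 3*c* s" for s
  have cmp: "G t0 = G s0" if "a < s0" "s0 < t0" "t0 < b" "\<And>s. s\<in>{s0..t0} \<Longrightarrow> v s \<noteq> 0" for s0 t0
    using cmp1[OF that] cmp2[OF that] by (simp add: G_def algebra_simps)
  have zuniq: "False" if "v z1 = 0" "v z2 = 0" "a < z1" "z1 < z2" "z2 < b" for z1 z2
  proof -
    have cz: "continuous_on {z1..z2} f" by (rule continuous_on_subset[OF cont]) (use that in auto)
    have d0: "(f has_real_derivative 0) (at x)" if "z1 < x" "x < z2" for x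
    proof -
      have vx: "v x = 0" using mono[of z1 x] mono[of x z2] that \<open>v z1 = 0\<close> \<open>v z2 = 0\<close> \<open>a < z1\<close> \<open>z2 < b\<close> by force
      have xin: "x \<in> {a<..<b}" using that \<open>a < z1\<close> \<open>z2 < b\<close> by auto
      show ?thesis using bspec[OF dv xin] vx by simp
    qed
    have fc: "f x = f z1" if "z1 \<le> x" "x \<le> z2" for x
      by (rule DERIV_isconst2[OF \<open>z1 < z2\<close> cz d0 that])
    define mid where "mid = (z1 + z2)/2"
    have mid: "z1 < mid" "mid < z2" using \<open>z1 < z2\<close> by (auto simp: mid_def field_simps)
    have "utouch f {a<..<b} mid 0 0"
      unfolding utouch_def
    proof (intro conjI exI[of _ "min (mid - z1) (z2 - mid)"] allI impI)
      show "mid \<in> {a<..<b}" using mid that by auto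
      show "min (mid - z1) (z2 - mid) > 0" using mid by auto
      fix s assume s: "\<bar>s - mid\<bar> < min (mid - z1) (z2 - mid)"
      thus "s \<in> {a<..<b}" using that by auto
      show "f s \<le> f mid + 0 * (s - mid) + 0 / 2 * (s - mid)\<^sup>2"
        using fc[of s] fc[of mid] s mid by auto
    qed
    hence "c \<le> 0" using sub by force
    thus False using c by simp
  qed
  have Gc: "isCont G s" if "s \<in> {a<..<b}" for s
    unfolding G_def using vc that by (intro continuous_intros) auto
  have Geq: "G t = G s" if st: "a < s" "s < t" "t < b" for s t
  proof (cases "\<forall>x\<in>{s..t}. v x \<noteq> 0")
    case True thus ?thesis using cmp[OF st] by blast
  next
    case False
    then obtain z where z: "z \<in> {s..t}" "v z = 0" by auto
    have nz: "v x \<noteq> 0" if "x \<in> {s..t}" "x \<noteq> z" for x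
    proof
      assume "v x = 0"
      show False
      proof (cases "x < z")
        case True thus False using zuniq[of x z] \<open>v x = 0\<close> z st that by auto
      next
        case False thus False using zuniq[of z x] \<open>v x = 0\<close> z st that by auto
      qed
    qed
    have L: "G z = G s"
    proof (cases "s = z")
      case False
      hence sz: "s < z" using z by auto
      show ?thesis
      proof (rule glue_left[OF Gc sz])
        show "z \<in> {a<..<b}" using z st by auto
        fix s' assume s': "s \<le> s'" "s' < z"
        show "G s' = G s"
        proof (cases "s = s'")
          case False
          thus ?thesis using cmp[of s s'] s' st z nz by auto
        qed simp
      qed
    qed simp
    have R: "G z = G t"
    proof (cases "t = z")
      case False
      hence zt: "z < t" using z by auto
      show ?thesis
      proof (rule glue_right[OF Gc zt])
        show "z \<in> {a<..<b}" using z st by auto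
        fix t' assume t': "z < t'" "t' \<le> t"
        show "G t' = G t"
        proof (cases "t = t'")
          case False
          thus ?thesis using cmp[of t' t] t' st z nz by auto
        qed simp
      qed
    qed simp
    show ?thesis using L R by simp
  qed
  define mid where "mid = (a+b)/2"
  have mid: "a < mid" "mid < b" using ab by (auto simp: mid_def field_simps)
  have "\<forall>s\<in>{a<..<b}. (f has_real_derivative v s) (at s) \<and> v s ^ 3 = G mid + 3*c* s"
  proof
    fix s assume s: "s \<in> {a<..<b}"
    have "G s = G mid"
      using Geq[of s mid] Geq[of mid s] s mid by (cases s mid rule: linorder_cases) auto
    thus "(f has_real_derivative v s) (at s) \<and> v s ^ 3 = G mid + 3*c* s"
      using dv s by (auto simp: G_def)
  qed
  thus ?thesis by blast
qed

lemma deriv_affine: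
  fixes f :: "real \<Rightarrow> real"
  assumes d: "\<And>s. s \<in> {p<..<q} \<Longrightarrow> (f has_real_derivative d) (at s)" and t: "t \<in> {p<..<q}" and s: "s \<in> {p<..<q}"
  shows "f s = f t + d*(s-t)"
proof -
  have "\<exists>c. \<forall>x\<in>{p<..<q}. f x - d*x = c"
  proof (rule has_field_derivative_zero_constant)
    show "convex {p<..<q}" by simp
    fix x assume x: "x \<in> {p<..<q}"
    have "((\<lambda>x. f x - d*x) has_real_derivative d - d) (at x)"
      by (auto intro!: derivative_eq_intros d[OF x])
    thus "((\<lambda>x. f x - d*x) has_real_derivative 0) (at x within {p<..<q})"
      by (simp add: has_field_derivative_at_within)
  qed
  then obtain c where "\<forall>x\<in>{p<..<q}. f x - d*x = c" by blast
  hence "f s - d* s = c" "f t - d*t = c" using s t by auto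
  thus ?thesis by (simp add: algebra_simps)
qed

lemma sl_neg: "sl (\<lambda>s. - f s) x y = - sl f x y"
  unfolding sl_def by (simp add: field_simps minus_divide_left)

lemma T1zero:
  fixes f :: "real \<Rightarrow> real"
  assumes cont: "continuous_on {a<..<b} f" and ab: "a < b"
    and sub: "\<And>t p X. utouch f {a<..<b} t p X \<Longrightarrow> 0 \<le> p^2*X"
    and sup: "\<And>t p X. ltouch f {a<..<b} t p X \<Longrightarrow> p^2*X \<le> 0"
  shows "\<exists>m. \<forall>s\<in>{a<..<b}. (f has_real_derivative m) (at s)"
proof -
  have cv: "cvx f a b" unfolding cvx_def
    by (intro allI impI, rule sub0_convex[OF cont]) (auto intro: sub)
  have contn: "continuous_on {a<..<b} (\<lambda>s. - f s)" using cont by (intro continuous_intros)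
  have subn: "0 \<le> p^2*X" if "utouch (\<lambda>s. - f s) {a<..<b} t p X" for t p X
  proof -
    have "ltouch f {a<..<b} t (-p) (-X)" using that by (simp add: ltouch_neg)
    hence "(-p)^2*(-X) \<le> 0" by (rule sup)
    thus ?thesis by simp
  qed
  have cvn: "cvx (\<lambda>s. - f s) a b" unfolding cvx_def
    by (intro allI impI, rule sub0_convex[OF contn]) (auto intro: subn)
  have eq3: "sl f x y = sl f x z \<and> sl f x z = sl f y z" if "a < x" "x < y" "y < z" "z < b" for x y z
    using cvx_sl[OF cv that] cvx_sl[OF cvn that] unfolding sl_neg by linarith
  define x0 where "x0 = (a+b)/2"
  define x1 where "x1 = (x0+b)/2"
  have x01: "a < x0" "x0 < x1" "x1 < b" using ab by (auto simp: x0_def x1_def field_simps)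
  define m where "m = sl f x0 x1"
  have aff: "f s = f x0 + m*(s - x0)" if s: "s \<in> {a<..<b}" for s
  proof (cases "s = x0")
    case False
    have "sl f x0 s = m"
    proof (cases s x1 rule: linorder_cases)
      case less
      show ?thesis
      proof (cases "s < x0")
        case True
        thus ?thesis using eq3[of s x0 x1] s x01 by (auto simp: m_def sl_sym)
      next
        case False
        hence "x0 < s" using \<open>s \<noteq> x0\<close> by auto
        thus ?thesis using eq3[of x0 s x1] s x01 less by (auto simp: m_def)
      qed
    next
      case equal thus ?thesis by (simp add: m_def)
    next
      case greater
      thus ?thesis using eq3[of x0 x1 s] s x01 by (auto simp: m_def)
    qed
    thus ?thesis using sl_eq[OF False[symmetric], of f] by (simp add: algebra_simps)
  qed simp
  have "(f has_real_derivative m) (at s)" if s: "s \<in> {a<..<b}" for s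
  proof (rule has_field_derivative_transform_within_open[OF _ open_greaterThanLessThan s])
    show "((\<lambda>s. f x0 + m*(s - x0)) has_real_derivative m) (at s)"
      by (auto intro!: derivative_eq_intros)
    fix x assume "x \<in> {a<..<b}"
    thus "f x0 + m*(x - x0) = f x" using aff by simp
  qed
  thus ?thesis by blast
qed

lemma T1:
  fixes f :: "real \<Rightarrow> real"
  assumes cont: "continuous_on {a<..<b} f" and ab: "a < b"
    and sub: "\<And>t p X. utouch f {a<..<b} t p X \<Longrightarrow> c \<le> p^2*X"
    and sup: "\<And>t p X. ltouch f {a<..<b} t p X \<Longrightarrow> p^2*X \<le> c"
  shows "\<exists>v K. \<forall>s\<in>{a<..<b}. (f has_real_derivative v s) (at s) \<and> v s ^ 3 = K + 3*c* s"
proof (cases c "0::real" rule: linorder_cases)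
  case greater show ?thesis by (rule T1pos[OF cont ab]) (use greater sub sup in auto)
next
  case equal
  then obtain m where "\<forall>s\<in>{a<..<b}. (f has_real_derivative m) (at s)"
    using T1zero[OF cont ab] sub sup by blast
  thus ?thesis using equal by (intro exI[of _ "\<lambda>_. m"] exI[of _ "m^3"]) auto
next
  case less
  have contn: "continuous_on {a<..<b} (\<lambda>s. - f s)" using cont by (intro continuous_intros)
  have subn: "-c \<le> p^2*X" if "utouch (\<lambda>s. - f s) {a<..<b} t p X" for t p X
  proof -
    have "ltouch f {a<..<b} t (-p) (-X)" using that by (simp add: ltouch_neg)
    hence "(-p)^2*(-X) \<le> c" by (rule sup)
    thus ?thesis by simp
  qed
  have supn: "p^2*X \<le> -c" if "ltouch (\<lambda>s. - f s) {a<..<b} t p X" for t p X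
  proof -
    have "utouch f {a<..<b} t (-p) (-X)" using that by (simp add: utouch_neg)
    hence "c \<le> (-p)^2*(-X)" by (rule sub)
    thus ?thesis by simp
  qed
  have "\<exists>v K. \<forall>s\<in>{a<..<b}. ((\<lambda>s. - f s) has_real_derivative v s) (at s) \<and> v s ^ 3 = K + 3*(-c)* s"
    by (rule T1pos[OF contn ab]) (use less subn supn in auto)
  then obtain v K where vK: "\<forall>s\<in>{a<..<b}. ((\<lambda>s. - f s) has_real_derivative v s) (at s) \<and> v s ^ 3 = K + 3*(-c)* s"
    by blast
  have "\<forall>s\<in>{a<..<b}. (f has_real_derivative - v s) (at s) \<and> (- v s) ^ 3 = (-K) + 3*c* s"
  proof
    fix s assume s: "s \<in> {a<..<b}"
    have "((\<lambda>s. - (- f s)) has_real_derivative - v s) (at s)" using vK s by (intro derivative_intros) auto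
    moreover have "(- v s) ^ 3 = - (v s ^ 3)" by simp
    ultimately show "(f has_real_derivative - v s) (at s) \<and> (- v s) ^ 3 = (-K) + 3*c* s"
      using vK s by auto
  qed
  thus ?thesis by (intro exI[of _ "\<lambda>s. - v s"] exI[of _ "-K"])
qed

lemma L0:
  fixes f :: "real \<Rightarrow> real"
  assumes cont: "continuous_on {a<..<b} f" and ab: "a < b" and e: "\<epsilon> > 0"
  shows "\<exists>t p X t' p' X'. utouch f {a<..<b} t p X \<and> ltouch f {a<..<b} t' p' X' \<and> p^2*X < p'^2*X' + \<epsilon>"
proof (rule ccontr)
  assume "\<not> ?thesis"
  hence H: "p'^2*X' + \<epsilon> \<le> p^2*X" if "utouch f {a<..<b} t p X" "ltouch f {a<..<b} t' p' X'" for t p X t' p' X'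
    using that by (meson not_le)
  define mid where "mid = (a+b)/2"
  have mid: "a < mid" "mid < b" using ab by (auto simp: mid_def field_simps)
  obtain t0 p0 X0 where u0: "utouch f {a<..<b} t0 p0 X0" using utouch_exists[OF cont mid] by blast
  have contn: "continuous_on {a<..<b} (\<lambda>s. - f s)" using cont by (intro continuous_intros)
  obtain t1 p1 X1 where "utouch (\<lambda>s. - f s) {a<..<b} t1 p1 X1" using utouch_exists[OF contn mid] by blast
  hence l1: "ltouch f {a<..<b} t1 (-p1) (-X1)" by (simp add: ltouch_neg)
  define Ls where "Ls = {p^2*X | t p X. ltouch f {a<..<b} t p X}"
  have Lne: "Ls \<noteq> {}" using l1 unfolding Ls_def by blast
  have Lbdd: "bdd_above Ls" unfolding Ls_def
    by (rule bdd_aboveI[of _ "p0^2*X0 - \<epsilon>"]) (use H[OF u0] in force)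
  define \<beta> where "\<beta> = Sup Ls"
  have lowb: "p^2*X \<le> \<beta>" if "ltouch f {a<..<b} t p X" for t p X
    unfolding \<beta>_def by (rule cSup_upper[OF _ Lbdd]) (use that Ls_def in blast)
  have upb: "\<beta> \<le> p^2*X - \<epsilon>" if "utouch f {a<..<b} t p X" for t p X
    unfolding \<beta>_def by (rule cSup_least[OF Lne]) (use H[OF that] Ls_def in force)
  have "\<exists>v K. \<forall>s\<in>{a<..<b}. (f has_real_derivative v s) (at s) \<and> v s ^ 3 = K + 3*\<beta>* s"
    by (rule T1[OF cont ab]) (use upb lowb e in \<open>force+\<close>)
  then obtain v K where vK: "\<And>s. s\<in>{a<..<b} \<Longrightarrow> (f has_real_derivative v s) (at s) \<and> v s ^ 3 = K + 3*\<beta>* s"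
    by blast
  have vr: "v s = root 3 (K + 3*\<beta>* s)" if "s \<in> {a<..<b}" for s
    using vK[OF that] by (metis odd_real_root_power_cancel odd_numeral)
  show False
  proof (cases "\<beta> = 0")
    case True
    have d: "(f has_real_derivative root 3 K) (at s)" if "s \<in> {a<..<b}" for s
      using vK[OF that] vr[OF that] True by simp
    have "utouch f {a<..<b} mid (root 3 K) 0"
      unfolding utouch_def
    proof (intro conjI exI[of _ "min (mid - a) (b - mid)"] allI impI)
      show "mid \<in> {a<..<b}" using mid by auto
      show "min (mid - a) (b - mid) > 0" using mid by auto
      fix s assume s: "\<bar>s - mid\<bar> < min (mid - a) (b - mid)"
      thus sin: "s \<in> {a<..<b}" by auto
      show "f s \<le> f mid + root 3 K * (s - mid) + 0 / 2 * (s - mid)\<^sup>2"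
        using deriv_affine[OF d _ sin, of mid] mid by simp
    qed
    hence "\<beta> \<le> (root 3 K)^2*0 - \<epsilon>" by (rule upb)
    thus False using True e by simp
  next
    case False
    define t2 where "t2 = (mid + b)/2"
    have t2: "mid < t2" "t2 < b" using mid by (auto simp: t2_def field_simps)
    obtain t where t: "t \<in> {a<..<b}" "K + 3*\<beta>*t \<noteq> 0"
    proof (cases "K + 3*\<beta>*mid = 0")
      case True
      have "K + 3*\<beta>*t2 \<noteq> 0"
      proof
        assume "K + 3*\<beta>*t2 = 0"
        moreover have "3*\<beta>*(t2 - mid) = (K + 3*\<beta>*t2) - (K + 3*\<beta>*mid)" by (simp add: algebra_simps)
        ultimately have "3*\<beta>*(t2 - mid) = 0" using True by simp
        thus False using False t2 by simp
      qed
      thus ?thesis using that[of t2] t2 mid by auto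
    next
      case False thus ?thesis using that[of mid] mid by auto
    qed
    define \<rho> where "\<rho> s = root 3 (K + 3*\<beta>* s)" for s
    define W where "W s = \<rho> s ^ 4 / (4*\<beta>)" for s
    have cy: "isCont (\<lambda>s. K + 3*\<beta>* s) t" by (intro continuous_intros)
    obtain \<eta>0 where e0: "\<eta>0 > 0" "\<And>s. dist s t < \<eta>0 \<Longrightarrow> dist (K + 3*\<beta>* s) (K + 3*\<beta>*t) < \<bar>K + 3*\<beta>*t\<bar>"
      using cy[unfolded continuous_at_eps_delta] t(2) by (meson zero_less_abs_iff)
    define \<eta>1 where "\<eta>1 = min \<eta>0 (min (t - a) (b - t))"
    have eta1: "\<eta>1 > 0" using e0 t by (auto simp: \<eta>1_def)
    define J where "J = {t - \<eta>1 <..< t + \<eta>1}"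
    have JI: "s \<in> {a<..<b}" and Jy: "K + 3*\<beta>* s \<noteq> 0" if "s \<in> J" for s
    proof -
      show "s \<in> {a<..<b}" using that by (auto simp: J_def \<eta>1_def)
      have "dist s t < \<eta>0" using that by (auto simp: J_def \<eta>1_def dist_real_def)
      thus "K + 3*\<beta>* s \<noteq> 0" using e0(2) by (force simp: dist_real_def)
    qed
    have d0: "((\<lambda>s. f s - W s) has_real_derivative 0) (at s)" if "s \<in> J" for s
    proof -
      have "((\<lambda>s. f s - W s) has_real_derivative v s - \<rho> s) (at s)"
        unfolding W_def \<rho>_def by (rule DERIV_diff[OF conjunct1[OF vK[OF JI[OF that]]] deriv_W[OF Jy[OF that] False]])
      thus ?thesis using vr[OF JI[OF that]] by (simp add: \<rho>_def)
    qed
    have tJ: "t \<in> J" using eta1 by (auto simp: J_def)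
    have fW: "f s - W s = f t - W t" if "s \<in> J" for s
      using deriv_affine[of "t - \<eta>1" "t + \<eta>1" "\<lambda>s. f s - W s" 0 t s] d0 tJ that by (simp add: J_def)
    have r0: "\<rho> t \<noteq> 0" using t(2) by (simp add: \<rho>_def)
    hence r2: "\<rho> t ^ 2 > 0" by simp
    define \<delta> where "\<delta> = \<epsilon> / (4 * \<rho> t ^ 2)"
    have dd: "\<delta> > 0" using e r2 by (simp add: \<delta>_def)
    obtain \<eta> where eta: "\<eta> > 0" "\<And>s. \<bar>s - t\<bar> < \<eta> \<Longrightarrow>
        W s \<le> W t + \<rho> t * (s-t) + (\<beta> / \<rho> t ^2 + 2*\<delta>)/2 * (s-t)^2"
      using W_touch[OF False t(2) dd] unfolding W_def \<rho>_def by blast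
    have "utouch f {a<..<b} t (\<rho> t) (\<beta> / \<rho> t ^2 + 2*\<delta>)"
      unfolding utouch_def
    proof (intro conjI exI[of _ "min \<eta> \<eta>1"] allI impI)
      show "t \<in> {a<..<b}" using t by simp
      show "min \<eta> \<eta>1 > 0" using eta eta1 by simp
      fix s assume s: "\<bar>s - t\<bar> < min \<eta> \<eta>1"
      hence sJ: "s \<in> J" by (auto simp: J_def)
      thus "s \<in> {a<..<b}" by (rule JI)
      show "f s \<le> f t + \<rho> t * (s - t) + (\<beta> / \<rho> t ^2 + 2*\<delta>) / 2 * (s - t)^2"
        using fW[OF sJ] eta(2)[of s] s by simp
    qed
    hence "\<beta> \<le> (\<rho> t)^2 * (\<beta> / \<rho> t ^2 + 2*\<delta>) - \<epsilon>" by (rule upb)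
    also have "\<dots> = \<beta> - \<epsilon>/2" using r2 by (simp add: \<delta>_def field_simps)
    finally show False using e by simp
  qed
qed

lemma diag_mult: "((\<chi> i j. if i = j then d i else 0) *v h) = (\<chi> i. d i * h $ i)"
  for d :: "'n::finite \<Rightarrow> real" and h :: "real^'n"
  by (simp add: matrix_vector_mult_def vec_eq_iff if_distrib if_distribR cong: if_cong)

lemma testfun:
  fixes tt pp XX :: "'n::finite \<Rightarrow> real" and \<sigma> :: "'n \<Rightarrow> real \<Rightarrow> real" and S :: "(real^'n) set"
  shows "C2_on S (\<lambda>x. \<Sum>j\<in>UNIV. \<sigma> j (tt j) + pp j * (x$j - tt j) + XX j/2 * (x$j - tt j)^2)
                  (\<lambda>x. \<chi> j. pp j + XX j * (x$j - tt j))
                  (\<lambda>x. \<chi> i j. if i = j then XX i else 0)"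
    and "inf_lap ((\<lambda>x. \<chi> j. pp j + XX j * (x$j - tt j)) (\<chi> j. tt j))
                 ((\<lambda>x. (\<chi> i j. if i = j then XX i else 0) :: real^'n^'n) (\<chi> j. tt j))
         = (\<Sum>j\<in>UNIV. pp j^2 * XX j)"
proof -
  define D :: "real^'n^'n" where "D = (\<chi> i j. if i = j then XX i else 0)"
  define c0 :: "real^'n" where "c0 = (\<chi> j. pp j - XX j * tt j)"
  have geq: "(\<lambda>x. \<chi> j. pp j + XX j * (x$j - tt j)) = (\<lambda>x. c0 + D *v x)"
    by (rule ext) (simp add: D_def c0_def diag_mult vec_eq_iff algebra_simps)
  have d1: "((\<lambda>x. \<Sum>j\<in>UNIV. \<sigma> j (tt j) + pp j * (x$j - tt j) + XX j/2 * (x$j - tt j)^2)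
      has_derivative (\<lambda>h. (\<chi> j. pp j + XX j * (x$j - tt j)) \<bullet> h)) (at x)" for x :: "real^'n"
  proof -
    have vn: "((\<lambda>x. x$j) has_derivative (\<lambda>h. h$j)) (at x)" for j
      by (rule bounded_linear_imp_has_derivative[OF bounded_linear_vec_nth])
    have t: "((\<lambda>x. \<sigma> j (tt j) + pp j * (x$j - tt j) + XX j/2 * (x$j - tt j)^2)
      has_derivative (\<lambda>h. (pp j + XX j * (x$j - tt j)) * h$j)) (at x)" for j
      by (rule has_derivative_eq_rhs, (rule derivative_eq_intros vn refl)+) (auto simp: algebra_simps power2_eq_square)
    have "((\<lambda>x. \<Sum>j\<in>UNIV. \<sigma> j (tt j) + pp j * (x$j - tt j) + XX j/2 * (x$j - tt j)^2)
      has_derivative (\<lambda>h. \<Sum>j\<in>UNIV. (pp j + XX j * (x$j - tt j)) * h$j)) (at x)"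
      by (rule has_derivative_sum) (rule t)
    moreover have "(\<lambda>h. \<Sum>j\<in>UNIV. (pp j + XX j * (x$j - tt j)) * h$j) = (\<lambda>h. (\<chi> j. pp j + XX j * (x$j - tt j)) \<bullet> h)"
      by (rule ext) (simp add: inner_vec_def)
    ultimately show ?thesis by simp
  qed
  have d2: "((\<lambda>x. \<chi> j. pp j + XX j * (x$j - tt j)) has_derivative (\<lambda>h. (\<lambda>x. \<chi> i j. if i = j then XX i else 0) x *v h)) (at x)"
    for x :: "real^'n"
    unfolding geq D_def[symmetric]
    by (rule has_derivative_add[OF has_derivative_const bounded_linear_imp_has_derivative[OF matrix_vector_mul_bounded_linear], simplified])
  show "C2_on S (\<lambda>x. \<Sum>j\<in>UNIV. \<sigma> j (tt j) + pp j * (x$j - tt j) + XX j/2 * (x$j - tt j)^2)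
                  (\<lambda>x. \<chi> j. pp j + XX j * (x$j - tt j))
                  (\<lambda>x. \<chi> i j. if i = j then XX i else 0)"
    unfolding C2_on_def using d1 d2 by (auto intro: continuous_on_const)
  show "inf_lap ((\<lambda>x. \<chi> j. pp j + XX j * (x$j - tt j)) (\<chi> j. tt j))
                 ((\<lambda>x. (\<chi> i j. if i = j then XX i else 0) :: real^'n^'n) (\<chi> j. tt j))
         = (\<Sum>j\<in>UNIV. pp j^2 * XX j)"
    by (simp add: inf_lap_def diag_mult inner_vec_def power2_eq_square algebra_simps)
qed


lemma coupling_gen:
  fixes u :: "real^'n::finite \<Rightarrow> real" and \<sigma> :: "'n \<Rightarrow> real \<Rightarrow> real" and xc :: "real^'n"
    and tt pp XX :: "'n \<Rightarrow> real" and sg :: real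
  assumes us: "\<And>X. X \<in> ball 0 1 \<Longrightarrow> u X = (\<Sum>i\<in>UNIV. \<sigma> i (X$i))"
    and cube: "\<And>x::real^'n. (\<forall>j. \<bar>x$j - xc$j\<bar> < r) \<Longrightarrow> x \<in> ball 0 1"
    and sg: "sg = 1 \<or> sg = -1"
    and T: "\<And>j. tt j \<in> {xc$j - r<..<xc$j + r} \<and> (\<exists>\<eta>>0. \<forall>s. \<bar>s - tt j\<bar> < \<eta> \<longrightarrow>
              s \<in> {xc$j - r<..<xc$j + r} \<and> sg * \<sigma> j s \<le> sg * (\<sigma> j (tt j) + pp j*(s - tt j) + XX j/2*(s - tt j)^2))"
  shows "(\<chi> j. tt j) \<in> ball 0 1 \<and> (\<exists>\<rho>>0. \<forall>x\<in>ball 0 1 \<inter> ball (\<chi> j. tt j) \<rho>.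
            sg * (u x - (\<Sum>j\<in>UNIV. \<sigma> j (tt j) + pp j * (x$j - tt j) + XX j/2 * (x$j - tt j)^2))
         \<le> sg * (u (\<chi> j. tt j) - (\<Sum>j\<in>UNIV. \<sigma> j (tt j) + pp j * ((\<chi> j. tt j)$j - tt j) + XX j/2 * ((\<chi> j. tt j)$j - tt j)^2)))"
proof -
  obtain \<eta> where eta: "\<And>j. \<eta> j > 0" "\<And>j s. \<bar>s - tt j\<bar> < \<eta> j \<Longrightarrow>
              sg * \<sigma> j s \<le> sg * (\<sigma> j (tt j) + pp j*(s - tt j) + XX j/2*(s - tt j)^2)"
    using T by metis
  define \<rho> where "\<rho> = Min (range \<eta>)"
  have rho: "\<rho> > 0" unfolding \<rho>_def using eta(1) by (simp add: Min_gr_iff)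
  have rle: "\<rho> \<le> \<eta> j" for j unfolding \<rho>_def by simp
  have xs: "(\<chi> j. tt j) \<in> ball 0 1"
  proof (rule cube, intro allI)
    fix j
    have "tt j \<in> {xc$j - r<..<xc$j + r}" using T by blast
    thus "\<bar>(\<chi> j. tt j)$j - xc$j\<bar> < r" by (auto simp: abs_less_iff)
  qed
  have us': "u (\<chi> j. tt j) = (\<Sum>j\<in>UNIV. \<sigma> j (tt j))" using us[OF xs] by simp
  show ?thesis
  proof (intro conjI xs exI[of _ \<rho>] rho ballI)
    fix x assume x: "x \<in> ball 0 1 \<inter> ball (\<chi> j. tt j) \<rho>"
    have "\<bar>x$j - tt j\<bar> < \<eta> j" for j
    proof -
      have "dist (x$j) ((\<chi> j. tt j)$j) \<le> dist x (\<chi> j. tt j)" by (rule dist_vec_nth_le)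
      also have "\<dots> < \<rho>" using x by (simp add: dist_commute)
      finally show ?thesis using rle[of j] by (simp add: dist_real_def)
    qed
    hence le: "sg * \<sigma> j (x$j) \<le> sg * (\<sigma> j (tt j) + pp j*(x$j - tt j) + XX j/2*(x$j - tt j)^2)" for j
      using eta(2) by blast
    have "sg * u x = (\<Sum>j\<in>UNIV. sg * \<sigma> j (x$j))" using us x by (simp add: sum_distrib_left)
    also have "\<dots> \<le> (\<Sum>j\<in>UNIV. sg * (\<sigma> j (tt j) + pp j*(x$j - tt j) + XX j/2*(x$j - tt j)^2))"
      by (rule sum_mono) (rule le)
    finally show "sg * (u x - (\<Sum>j\<in>UNIV. \<sigma> j (tt j) + pp j * (x$j - tt j) + XX j/2 * (x$j - tt j)^2))
         \<le> sg * (u (\<chi> j. tt j) - (\<Sum>j\<in>UNIV. \<sigma> j (tt j) + pp j * ((\<chi> j. tt j)$j - tt j) + XX j/2 * ((\<chi> j. tt j)$j - tt j)^2))"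
      using us' by (simp add: sum_distrib_left right_diff_distrib)
  qed
qed

lemma coupling:
  fixes u :: "real^'n::finite \<Rightarrow> real" and \<sigma> :: "'n \<Rightarrow> real \<Rightarrow> real" and x0 :: "real^'n"
    and tt pp XX :: "'n \<Rightarrow> real"
  assumes ih: "inf_harmonic (ball 0 1) u"
    and us: "\<And>X. X \<in> ball 0 1 \<Longrightarrow> u X = (\<Sum>i\<in>UNIV. \<sigma> i (X$i))"
    and cube: "\<And>x::real^'n. (\<forall>j. \<bar>x$j - x0$j\<bar> < r) \<Longrightarrow> x \<in> ball 0 1"
  shows "(\<And>j. utouch (\<sigma> j) {x0$j - r<..<x0$j + r} (tt j) (pp j) (XX j)) \<Longrightarrow> 0 \<le> (\<Sum>j\<in>UNIV. pp j^2 * XX j)"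
    and "(\<And>j. ltouch (\<sigma> j) {x0$j - r<..<x0$j + r} (tt j) (pp j) (XX j)) \<Longrightarrow> (\<Sum>j\<in>UNIV. pp j^2 * XX j) \<le> 0"
proof -
  let ?\<Phi> = "\<lambda>x::real^'n. \<Sum>j\<in>UNIV. \<sigma> j (tt j) + pp j * (x$j - tt j) + XX j/2 * (x$j - tt j)^2"
  let ?g = "\<lambda>x::real^'n. \<chi> j. pp j + XX j * (x$j - tt j)"
  let ?H = "\<lambda>x::real^'n. (\<chi> i j. if i = j then XX i else 0) :: real^'n^'n"
  have C2: "C2_on (ball 0 1) ?\<Phi> ?g ?H" by (rule testfun(1))
  have lap: "inf_lap (?g (\<chi> j. tt j)) (?H (\<chi> j. tt j)) = (\<Sum>j\<in>UNIV. pp j^2 * XX j)" by (rule testfun(2))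
  have ih1: "\<And>\<phi> g H x0. C2_on (ball 0 1) \<phi> g H \<and> x0 \<in> ball 0 1 \<and>
        (\<exists>r>0. \<forall>x\<in>ball 0 1 \<inter> ball x0 r. u x - \<phi> x \<le> u x0 - \<phi> x0) \<Longrightarrow> inf_lap (g x0) (H x0) \<ge> 0"
    and ih2: "\<And>\<phi> g H x0. C2_on (ball 0 1) \<phi> g H \<and> x0 \<in> ball 0 1 \<and>
        (\<exists>r>0. \<forall>x\<in>ball 0 1 \<inter> ball x0 r. u x - \<phi> x \<ge> u x0 - \<phi> x0) \<Longrightarrow> inf_lap (g x0) (H x0) \<le> 0"
    using ih unfolding inf_harmonic_def by blast+
  {
    assume T: "\<And>j. utouch (\<sigma> j) {x0$j - r<..<x0$j + r} (tt j) (pp j) (XX j)"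
    have "(\<chi> j. tt j) \<in> ball 0 1 \<and> (\<exists>\<rho>>0. \<forall>x\<in>ball 0 1 \<inter> ball (\<chi> j. tt j) \<rho>.
            1 * (u x - ?\<Phi> x) \<le> 1 * (u (\<chi> j. tt j) - ?\<Phi> (\<chi> j. tt j)))"
      by (rule coupling_gen[where r=r and xc=x0]) (use us cube T in \<open>auto simp: utouch_def\<close>)
    then obtain \<rho> where xs: "(\<chi> j. tt j) \<in> ball 0 1" and rho: "\<rho> > 0"
      and HH: "\<And>x. x \<in> ball 0 1 \<inter> ball (\<chi> j. tt j) \<rho> \<Longrightarrow> 1 * (u x - ?\<Phi> x) \<le> 1 * (u (\<chi> j. tt j) - ?\<Phi> (\<chi> j. tt j))"
      by blast
    have "\<exists>r>0. \<forall>x\<in>ball 0 1 \<inter> ball (\<chi> j. tt j) r. u x - ?\<Phi> x \<le> u (\<chi> j. tt j) - ?\<Phi> (\<chi> j. tt j)"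
      using rho HH by (intro exI[of _ \<rho>]) simp
    hence "inf_lap (?g (\<chi> j. tt j)) (?H (\<chi> j. tt j)) \<ge> 0" using C2 xs by (intro ih1[of ?\<Phi> ?g ?H "\<chi> j. tt j"]) blast
    thus "0 \<le> (\<Sum>j\<in>UNIV. pp j^2 * XX j)" using lap by simp
  next
    assume T: "\<And>j. ltouch (\<sigma> j) {x0$j - r<..<x0$j + r} (tt j) (pp j) (XX j)"
    have "(\<chi> j. tt j) \<in> ball 0 1 \<and> (\<exists>\<rho>>0. \<forall>x\<in>ball 0 1 \<inter> ball (\<chi> j. tt j) \<rho>.
            (-1) * (u x - ?\<Phi> x) \<le> (-1) * (u (\<chi> j. tt j) - ?\<Phi> (\<chi> j. tt j)))"
    proof (rule coupling_gen[where r=r and xc=x0])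
      fix j
      obtain e1 where "e1 > 0" "tt j \<in> {x0$j - r<..<x0$j + r}" "\<forall>s. \<bar>s - tt j\<bar> < e1 \<longrightarrow> s \<in> {x0$j - r<..<x0$j + r} \<and>
            \<sigma> j s \<ge> \<sigma> j (tt j) + pp j*(s - tt j) + XX j/2*(s - tt j)^2"
        using T[of j] unfolding ltouch_def by blast
      thus "tt j \<in> {x0$j - r<..<x0$j + r} \<and> (\<exists>\<eta>>0. \<forall>s. \<bar>s - tt j\<bar> < \<eta> \<longrightarrow>
              s \<in> {x0$j - r<..<x0$j + r} \<and> (-1) * \<sigma> j s \<le> (-1) * (\<sigma> j (tt j) + pp j*(s - tt j) + XX j/2*(s - tt j)^2))"
        by (auto intro!: exI[of _ e1])
    qed (use us cube in auto)
    then obtain \<rho> where xs: "(\<chi> j. tt j) \<in> ball 0 1" and rho: "\<rho> > 0"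
      and HH: "\<And>x. x \<in> ball 0 1 \<inter> ball (\<chi> j. tt j) \<rho> \<Longrightarrow> (-1) * (u x - ?\<Phi> x) \<le> (-1) * (u (\<chi> j. tt j) - ?\<Phi> (\<chi> j. tt j))"
      by blast
    have "\<exists>r>0. \<forall>x\<in>ball 0 1 \<inter> ball (\<chi> j. tt j) r. u x - ?\<Phi> x \<ge> u (\<chi> j. tt j) - ?\<Phi> (\<chi> j. tt j)"
    proof (intro exI[of _ \<rho>] conjI ballI rho)
      fix x assume "x \<in> ball 0 1 \<inter> ball (\<chi> j. tt j) \<rho>"
      from HH[OF this] show "u x - ?\<Phi> x \<ge> u (\<chi> j. tt j) - ?\<Phi> (\<chi> j. tt j)" by (simp only: mult_minus1 neg_le_iff_le)
    qed
    hence "inf_lap (?g (\<chi> j. tt j)) (?H (\<chi> j. tt j)) \<le> 0" using C2 xs by (intro ih2[of ?\<Phi> ?g ?H "\<chi> j. tt j"]) blast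
    thus "(\<Sum>j\<in>UNIV. pp j^2 * XX j) \<le> 0" using lap by simp
  }
qed

lemma local_reg:
  fixes u :: "real^'n::finite \<Rightarrow> real" and \<sigma> :: "'n \<Rightarrow> real \<Rightarrow> real" and x0 :: "real^'n"
  assumes ih: "inf_harmonic (ball 0 1) u"
    and us: "\<And>X. X \<in> ball 0 1 \<Longrightarrow> u X = (\<Sum>i\<in>UNIV. \<sigma> i (X$i))"
    and cont: "\<And>i. continuous_on UNIV (\<sigma> i)"
    and r: "r > 0"
    and cube: "\<And>x::real^'n. (\<forall>j. \<bar>x$j - x0$j\<bar> < r) \<Longrightarrow> x \<in> ball 0 1"
  shows "\<exists>v K c. \<forall>s\<in>{x0$i - r<..<x0$i + r}. (\<sigma> i has_real_derivative v s) (at s) \<and> v s ^ 3 = K + 3*c* s"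
proof -
  define I where "I j = {x0$j - r<..<x0$j + r}" for j
  have ab: "x0$j - r < x0$j + r" for j using r by simp
  have cI: "continuous_on (I j) (\<sigma> j)" for j using cont continuous_on_subset by blast
  have cIn: "continuous_on (I j) (\<lambda>s. - \<sigma> j s)" for j using cI by (intro continuous_intros)
  have up: "0 \<le> (\<Sum>j\<in>UNIV. pp j^2 * XX j)" if "\<And>j. utouch (\<sigma> j) (I j) (tt j) (pp j) (XX j)" for tt pp XX
    using coupling(1)[OF ih us cube] that unfolding I_def by blast
  have lo: "(\<Sum>j\<in>UNIV. pp j^2 * XX j) \<le> 0" if "\<And>j. ltouch (\<sigma> j) (I j) (tt j) (pp j) (XX j)" for tt pp XX
    using coupling(2)[OF ih us cube] that unfolding I_def by blast
  have LU: "p'^2*X' \<le> p^2*X" if U: "utouch (\<sigma> i) (I i) t p X" and L: "ltouch (\<sigma> i) (I i) t' p' X'" for t p X t' p' X'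
  proof (rule ccontr)
    assume "\<not> ?thesis"
    hence gap: "p'^2*X' - p^2*X > 0" by simp
    define n where "n = card (UNIV - {i})"
    define \<epsilon> where "\<epsilon> = (p'^2*X' - p^2*X) / (real n + 1)"
    have e0: "\<epsilon> > 0" using gap by (simp add: \<epsilon>_def)
    have ne: "real n * \<epsilon> < p'^2*X' - p^2*X"
    proof -
      have "real n * \<epsilon> < (real n + 1) * \<epsilon>" using e0 by simp
      also have "\<dots> = p'^2*X' - p^2*X" by (simp add: \<epsilon>_def)
      finally show ?thesis .
    qed
    have "\<forall>j. \<exists>z::real\<times>real\<times>real\<times>real\<times>real\<times>real.
        utouch (\<sigma> j) (I j) (fst z) (fst (snd z)) (fst (snd (snd z))) \<and>
        ltouch (\<sigma> j) (I j) (fst (snd (snd (snd z)))) (fst (snd (snd (snd (snd z))))) (snd (snd (snd (snd (snd z))))) \<and>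
        (fst (snd z))^2 * (fst (snd (snd z))) < (fst (snd (snd (snd (snd z)))))^2 * (snd (snd (snd (snd (snd z))))) + \<epsilon>"
    proof
      fix j
      obtain t p X t' p' X' where "utouch (\<sigma> j) (I j) t p X" "ltouch (\<sigma> j) (I j) t' p' X'" "p^2*X < p'^2*X' + \<epsilon>"
        using L0[OF cI[of j, unfolded I_def] ab e0] unfolding I_def by blast
      thus "\<exists>z::real\<times>real\<times>real\<times>real\<times>real\<times>real.
        utouch (\<sigma> j) (I j) (fst z) (fst (snd z)) (fst (snd (snd z))) \<and>
        ltouch (\<sigma> j) (I j) (fst (snd (snd (snd z)))) (fst (snd (snd (snd (snd z))))) (snd (snd (snd (snd (snd z))))) \<and>
        (fst (snd z))^2 * (fst (snd (snd z))) < (fst (snd (snd (snd (snd z)))))^2 * (snd (snd (snd (snd (snd z))))) + \<epsilon>"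
        by (intro exI[of _ "(t,p,X,t',p',X')"]) simp
    qed
    then obtain Z where Z: "\<And>j. utouch (\<sigma> j) (I j) (fst (Z j)) (fst (snd (Z j))) (fst (snd (snd (Z j))))"
        "\<And>j. ltouch (\<sigma> j) (I j) (fst (snd (snd (snd (Z j))))) (fst (snd (snd (snd (snd (Z j)))))) (snd (snd (snd (snd (snd (Z j))))))"
        "\<And>j. (fst (snd (Z j)))^2 * (fst (snd (snd (Z j)))) < (fst (snd (snd (snd (snd (Z j))))))^2 * (snd (snd (snd (snd (snd (Z j)))))) + \<epsilon>"
      by metis
    define tu where "tu j = (if j = i then t else fst (Z j))" for j
    define pu where "pu j = (if j = i then p else fst (snd (Z j)))" for j
    define Xu where "Xu j = (if j = i then X else fst (snd (snd (Z j))))" for j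
    define tl where "tl j = (if j = i then t' else fst (snd (snd (snd (Z j)))))" for j
    define pl where "pl j = (if j = i then p' else fst (snd (snd (snd (snd (Z j))))))" for j
    define Xl where "Xl j = (if j = i then X' else snd (snd (snd (snd (snd (Z j))))))" for j
    have "0 \<le> (\<Sum>j\<in>UNIV. pu j^2 * Xu j)"
      by (rule up[of tu]) (use U Z(1) in \<open>auto simp: tu_def pu_def Xu_def\<close>)
    moreover have "(\<Sum>j\<in>UNIV. pl j^2 * Xl j) \<le> 0"
      by (rule lo[of tl]) (use L Z(2) in \<open>auto simp: tl_def pl_def Xl_def\<close>)
    moreover have "(\<Sum>j\<in>UNIV. pu j^2 * Xu j) = p^2*X + (\<Sum>j\<in>UNIV-{i}. pu j^2 * Xu j)"
      by (simp add: sum.remove[of UNIV i] pu_def Xu_def)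
    moreover have "(\<Sum>j\<in>UNIV. pl j^2 * Xl j) = p'^2*X' + (\<Sum>j\<in>UNIV-{i}. pl j^2 * Xl j)"
      by (simp add: sum.remove[of UNIV i] pl_def Xl_def)
    moreover have "(\<Sum>j\<in>UNIV-{i}. pu j^2 * Xu j) \<le> (\<Sum>j\<in>UNIV-{i}. pl j^2 * Xl j + \<epsilon>)"
      by (rule sum_mono) (use Z(3) in \<open>auto simp: pu_def Xu_def pl_def Xl_def less_imp_le\<close>)
    moreover have "(\<Sum>j\<in>UNIV-{i}. pl j^2 * Xl j + \<epsilon>) = (\<Sum>j\<in>UNIV-{i}. pl j^2 * Xl j) + real n * \<epsilon>"
      by (simp add: sum.distrib n_def)
    ultimately show False using ne by linarith
  qed
  define Ls where "Ls = {p^2*X | t p X. ltouch (\<sigma> i) (I i) t p X}"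
  obtain t0 p0 X0 where u0: "utouch (\<sigma> i) (I i) t0 p0 X0"
    using utouch_exists[OF cI[of i, unfolded I_def], of "x0$i"] r unfolding I_def by auto
  obtain t1 p1 X1 where "utouch (\<lambda>s. - \<sigma> i s) (I i) t1 p1 X1"
    using utouch_exists[OF cIn[of i, unfolded I_def], of "x0$i"] r unfolding I_def by auto
  hence l1: "ltouch (\<sigma> i) (I i) t1 (-p1) (-X1)" by (simp add: ltouch_neg)
  have Lne: "Ls \<noteq> {}" using l1 unfolding Ls_def by blast
  have Lbdd: "bdd_above Ls" unfolding Ls_def
    by (rule bdd_aboveI[of _ "p0^2*X0"]) (use LU[OF u0] in force)
  define c where "c = Sup Ls"
  have "\<exists>v K. \<forall>s\<in>{x0$i - r<..<x0$i + r}. (\<sigma> i has_real_derivative v s) (at s) \<and> v s ^ 3 = K + 3*c* s"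
  proof (rule T1[OF cI[of i, unfolded I_def] ab])
    fix t p X assume "utouch (\<sigma> i) {x0$i - r<..<x0$i + r} t p X"
    hence U: "utouch (\<sigma> i) (I i) t p X" by (simp add: I_def)
    show "c \<le> p^2*X" unfolding c_def
      by (rule cSup_least[OF Lne]) (use LU[OF U] Ls_def in force)
  next
    fix t p X assume "ltouch (\<sigma> i) {x0$i - r<..<x0$i + r} t p X"
    hence L: "ltouch (\<sigma> i) (I i) t p X" by (simp add: I_def)
    show "p^2*X \<le> c" unfolding c_def
      by (rule cSup_upper[OF _ Lbdd]) (use L Ls_def in blast)
  qed
  thus ?thesis by blast
qed

lemma coord_reg:
  fixes u :: "real^'n::finite \<Rightarrow> real" and \<sigma> :: "'n \<Rightarrow> real \<Rightarrow> real"
  assumes ih: "inf_harmonic (ball 0 1) u"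
    and us: "\<And>X. X \<in> ball 0 1 \<Longrightarrow> u X = (\<Sum>i\<in>UNIV. \<sigma> i (X$i))"
    and cont: "\<And>i. continuous_on UNIV (\<sigma> i)"
  shows "\<exists>Kc. \<forall>s\<in>{-3/4<..<3/4}. (\<sigma> i has_real_derivative deriv (\<sigma> i) s) (at s) \<and>
            (deriv (\<sigma> i) s)^3 = (deriv (\<sigma> i) 0)^3 + Kc * s"
proof -
  define w where "w = deriv (\<sigma> i)"
  define E where "E s = w s ^ 3" for s
  define r :: real where "r = 1 / (4 * real CARD('n))"
  have r0: "r > 0" by (simp add: r_def)
  have loc: "\<exists>c K. \<forall>s\<in>{s0 - r<..<s0 + r}. (\<sigma> i has_real_derivative w s) (at s) \<and> E s = K + 3*c* s"
    if s0: "s0 \<in> {-3/4<..<3/4}" for s0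
  proof -
    define x0 :: "real^'n" where "x0 = (\<chi> j. if j = i then s0 else 0)"
    have cube: "x \<in> ball 0 1" if x: "\<forall>j. \<bar>x$j - x0$j\<bar> < r" for x :: "real^'n"
    proof -
      have "norm x0 \<le> (\<Sum>j\<in>UNIV. \<bar>x0$j\<bar>)" by (rule norm_le_l1_cart)
      also have "\<dots> = \<bar>s0\<bar>" by (simp add: x0_def if_distrib cong: if_cong)
      finally have n0: "norm x0 < 3/4" using s0 by auto
      have "norm (x - x0) \<le> (\<Sum>j\<in>UNIV. \<bar>(x - x0)$j\<bar>)" by (rule norm_le_l1_cart)
      also have "\<dots> < (\<Sum>j\<in>(UNIV::'n set). r)" by (rule sum_strict_mono_ex1) (use x in \<open>auto simp: less_imp_le\<close>)
      also have "\<dots> = 1/4" by (simp add: r_def)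
      finally have "norm (x - x0) < 1/4" .
      hence "norm x < 1" using n0 norm_triangle_ineq[of x0 "x - x0"] by simp
      thus ?thesis by simp
    qed
    obtain v K c where vK: "\<forall>s\<in>{x0$i - r<..<x0$i + r}. (\<sigma> i has_real_derivative v s) (at s) \<and> v s ^ 3 = K + 3*c* s"
      using local_reg[OF ih us cont r0 cube] by blast
    have xi: "x0$i = s0" by (simp add: x0_def)
    have "\<forall>s\<in>{s0 - r<..<s0 + r}. (\<sigma> i has_real_derivative w s) (at s) \<and> E s = K + 3*c* s"
    proof
      fix s assume s: "s \<in> {s0 - r<..<s0 + r}"
      have d: "(\<sigma> i has_real_derivative v s) (at s)" using vK s xi by auto
      hence "w s = v s" unfolding w_def by (rule DERIV_imp_deriv)
      thus "(\<sigma> i has_real_derivative w s) (at s) \<and> E s = K + 3*c* s" using vK s xi d by (auto simp: E_def)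
    qed
    thus ?thesis by blast
  qed
  have dE: "(E has_real_derivative deriv E s) (at s) \<and> (deriv E has_real_derivative 0) (at s)"
    if s: "s \<in> {-3/4<..<3/4}" for s
  proof -
    obtain c K where cK: "\<forall>x\<in>{s - r<..<s + r}. (\<sigma> i has_real_derivative w x) (at x) \<and> E x = K + 3*c* x"
      using loc[OF s] by blast
    have e1: "(E has_real_derivative 3*c) (at x)" if x: "x \<in> {s - r<..<s + r}" for x
    proof (rule has_field_derivative_transform_within_open[OF _ open_greaterThanLessThan x])
      show "((\<lambda>x. K + 3*c* x) has_real_derivative 3*c) (at x)" by (auto intro!: derivative_eq_intros)
      fix y assume "y \<in> {s - r<..<s + r}" thus "K + 3*c* y = E y" using cK by auto
    qed
    have sin: "s \<in> {s - r<..<s + r}" using r0 by auto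
    have "(deriv E has_real_derivative 0) (at s)"
    proof (rule has_field_derivative_transform_within_open[OF _ open_greaterThanLessThan sin])
      show "((\<lambda>x. 3*c) has_real_derivative 0) (at s)" by simp
      fix y assume "y \<in> {s - r<..<s + r}" thus "3*c = deriv E y" using e1 DERIV_imp_deriv by metis
    qed
    moreover have "(E has_real_derivative deriv E s) (at s)" using e1[OF sin] DERIV_imp_deriv by metis
    ultimately show ?thesis by simp
  qed
  define Kc where "Kc = deriv E 0"
  have Dc: "deriv E s = Kc" if "s \<in> {-3/4<..<3/4}" for s
    using deriv_affine[of "-3/4" "3/4" "deriv E" 0 0 s] dE that by (simp add: Kc_def)
  have Ea: "E s = E 0 + Kc * s" if "s \<in> {-3/4<..<3/4}" for s
    using deriv_affine[of "-3/4" "3/4" E Kc 0 s] dE Dc that by simp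
  have "\<forall>s\<in>{-3/4<..<3/4}. (\<sigma> i has_real_derivative w s) (at s) \<and> (w s)^3 = (w 0)^3 + Kc * s"
  proof
    fix s :: real assume s: "s \<in> {-3/4<..<3/4}"
    obtain c K where "\<forall>x\<in>{s - r<..<s + r}. (\<sigma> i has_real_derivative w x) (at x) \<and> E x = K + 3*c* x"
      using loc[OF s] by blast
    hence "(\<sigma> i has_real_derivative w s) (at s)" using r0 by auto
    thus "(\<sigma> i has_real_derivative w s) (at s) \<and> (w s)^3 = (w 0)^3 + Kc * s"
      using Ea[OF s] by (simp add: E_def)
  qed
  thus ?thesis unfolding w_def by blast
qed

lemma cube_diff: "\<bar>a - b\<bar>^3 \<le> 4 * \<bar>a^3 - b^3\<bar>" for a b :: real
proof -
  define q where "q = a^2 + a*b + b^2"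
  have f: "a^3 - b^3 = (a - b) * q" by (simp add: q_def power2_eq_square power3_eq_cube algebra_simps)
  have "4*q - (a-b)^2 = 3*(a+b)^2" by (simp add: q_def power2_eq_square algebra_simps)
  hence q4: "(a-b)^2 \<le> 4*q" by (smt (verit) zero_le_power2)
  have "\<bar>a - b\<bar>^3 = \<bar>a - b\<bar> * (a-b)^2" by (simp add: power2_eq_square power3_eq_cube abs_mult_self_eq)
  also have "\<dots> \<le> \<bar>a - b\<bar> * (4*q)" by (rule mult_left_mono[OF q4]) simp
  also have "\<dots> = 4 * (\<bar>a - b\<bar> * q)" by simp
  also have "\<bar>a - b\<bar> * q = \<bar>a^3 - b^3\<bar>"
  proof -
    have "q \<ge> 0" using q4 by (smt (verit) zero_le_power2)
    thus ?thesis unfolding f by (simp add: abs_mult)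
  qed
  finally show ?thesis .
qed

lemma root_bound: "0 \<le> x \<Longrightarrow> x^3 \<le> y \<Longrightarrow> x \<le> y powr (1/3)" for x y :: real
proof (cases "x = 0")
  case True thus ?thesis by simp
next
  case False
  assume x: "0 \<le> x" "x^3 \<le> y"
  hence xp: "x > 0" using False by simp
  have h1: "x^3 = x powr 3" using xp by (simp add: powr_numeral)
  have h2: "(x powr 3) powr (1/3) = x" using xp by (subst powr_powr) simp
  have e: "x = (x^3) powr (1/3)" using h1 h2 by simp
  have "(x^3) powr (1/3) \<le> y powr (1/3)" by (rule powr_mono2) (use x xp in auto)
  thus ?thesis using e by simp
qed

lemma hoelder_coord:
  fixes w :: "real \<Rightarrow> real"
  assumes "\<And>s. s \<in> {-3/4<..<3/4} \<Longrightarrow> (w s)^3 = (w 0)^3 + Kc * s"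
  shows "\<And>s t. s \<in> {-3/4<..<3/4} \<Longrightarrow> t \<in> {-3/4<..<3/4} \<Longrightarrow>
           \<bar>w s - w t\<bar> \<le> (4 * \<bar>Kc\<bar>) powr (1/3) * \<bar>s - t\<bar> powr (1/3)"
proof -
  fix s t :: real assume s: "s \<in> {-3/4<..<3/4}" and t: "t \<in> {-3/4<..<3/4}"
  have "\<bar>w s - w t\<bar>^3 \<le> 4 * \<bar>w s^3 - w t^3\<bar>" by (rule cube_diff)
  also have "w s^3 - w t^3 = Kc * (s - t)" using assms[OF s] assms[OF t] by (simp add: algebra_simps)
  also have "4 * \<bar>Kc * (s - t)\<bar> = (4 * \<bar>Kc\<bar>) * \<bar>s - t\<bar>" by (simp add: abs_mult)
  finally have "\<bar>w s - w t\<bar> \<le> ((4 * \<bar>Kc\<bar>) * \<bar>s - t\<bar>) powr (1/3)" by (rule root_bound[rotated]) simp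
  also have "\<dots> = (4 * \<bar>Kc\<bar>) powr (1/3) * \<bar>s - t\<bar> powr (1/3)" by (simp add: powr_mult)
  finally show "\<bar>w s - w t\<bar> \<le> (4 * \<bar>Kc\<bar>) powr (1/3) * \<bar>s - t\<bar> powr (1/3)" .
qed

theorem proposition4p2:
  fixes u :: "real^'n \<Rightarrow> real" and \<sigma> :: "'n \<Rightarrow> real \<Rightarrow> real"
  assumes "inf_harmonic (ball 0 1) u"
    and "\<And>i. continuous_on UNIV (\<sigma> i)"
    and "\<And>X. X \<in> ball 0 1 \<Longrightarrow> u X = (\<Sum>i\<in>UNIV. \<sigma> i (X $ i))"
  shows "C1_alpha_on (1/3) (ball 0 (1/2)) u"
proof -
  note ih = assms(1) and cont = assms(2) and us = assms(3)
  have "\<forall>i. \<exists>Kc. \<forall>s\<in>{-3/4<..<3/4}. (\<sigma> i has_real_derivative deriv (\<sigma> i) s) (at s) \<and>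
            (deriv (\<sigma> i) s)^3 = (deriv (\<sigma> i) 0)^3 + Kc * s"
    using coord_reg[OF ih us cont] by blast
  then obtain KC where KC: "\<And>i s. s\<in>{-3/4<..<3/4} \<Longrightarrow> (\<sigma> i has_real_derivative deriv (\<sigma> i) s) (at s) \<and>
            (deriv (\<sigma> i) s)^3 = (deriv (\<sigma> i) 0)^3 + KC i * s"
    by metis
  define w where "w i = deriv (\<sigma> i)" for i
  define C where "C i = (4 * \<bar>KC i\<bar>) powr (1/3)" for i
  define g where "g x = (\<chi> i. w i (x$i))" for x :: "real^'n"
  have hc: "\<bar>w i s - w i t\<bar> \<le> C i * \<bar>s - t\<bar> powr (1/3)"
    if "s \<in> {-3/4<..<3/4}" "t \<in> {-3/4<..<3/4}" for i s t
    unfolding C_def w_def by (rule hoelder_coord[OF conjunct2[OF KC] that])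
  have comp: "x$i \<in> {-3/4<..<3/4}" if "x \<in> ball 0 (1/2)" for x :: "real^'n" and i
  proof -
    have "\<bar>x$i\<bar> \<le> norm x" by (rule component_le_norm_cart)
    thus ?thesis using that by auto
  qed
  have deriv: "(u has_derivative (\<lambda>h. g x \<bullet> h)) (at x)" if x: "x \<in> ball 0 (1/2)" for x
  proof -
    have vn: "((\<lambda>X::real^'n. X$i) has_derivative (\<lambda>h. h$i)) (at x)" for i
      by (rule bounded_linear_imp_has_derivative[OF bounded_linear_vec_nth])
    have di: "((\<lambda>X::real^'n. \<sigma> i (X$i)) has_derivative (\<lambda>h. w i (x$i) * h$i)) (at x)" for i
    proof -
      have "(\<sigma> i has_derivative (*) (w i (x$i))) (at (x$i))"
        using conjunct1[OF KC[of "x$i" i, OF comp[OF x]]] unfolding w_def has_field_derivative_def .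
      from has_derivative_compose[OF vn this] show ?thesis by simp
    qed
    have "((\<lambda>X::real^'n. \<Sum>i\<in>UNIV. \<sigma> i (X$i)) has_derivative (\<lambda>h. \<Sum>i\<in>UNIV. w i (x$i) * h$i)) (at x)"
      by (rule has_derivative_sum) (rule di)
    moreover have "(\<lambda>h. \<Sum>i\<in>UNIV. w i (x$i) * h$i) = (\<lambda>h. g x \<bullet> h)"
      by (rule ext) (simp add: g_def inner_vec_def)
    ultimately have "((\<lambda>X::real^'n. \<Sum>i\<in>UNIV. \<sigma> i (X$i)) has_derivative (\<lambda>h. g x \<bullet> h)) (at x)" by simp
    moreover have "x \<in> ball 0 1" using x by auto
    ultimately show ?thesis
      by (rule has_derivative_transform_within_open[OF _ open_ball]) (use us in auto)
  qed
  have hol: "norm (g x - g y) \<le> (\<Sum>i\<in>UNIV. C i) * dist x y powr (1/3)"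
    if x: "x \<in> ball 0 (1/2)" and y: "y \<in> ball 0 (1/2)" for x y
  proof -
    have "norm (g x - g y) \<le> (\<Sum>i\<in>UNIV. \<bar>(g x - g y)$i\<bar>)" by (rule norm_le_l1_cart)
    also have "\<dots> = (\<Sum>i\<in>UNIV. \<bar>w i (x$i) - w i (y$i)\<bar>)" by (simp add: g_def)
    also have "\<dots> \<le> (\<Sum>i\<in>UNIV. C i * dist x y powr (1/3))"
    proof (rule sum_mono)
      fix i :: 'n
      have "\<bar>w i (x$i) - w i (y$i)\<bar> \<le> C i * \<bar>x$i - y$i\<bar> powr (1/3)"
        by (rule hc[OF comp[OF x] comp[OF y]])
      also have "\<dots> \<le> C i * dist x y powr (1/3)"
      proof (rule mult_left_mono)
        have "\<bar>x$i - y$i\<bar> \<le> dist x y" using dist_vec_nth_le[of x i y] by (simp add: dist_real_def)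
        thus "\<bar>x$i - y$i\<bar> powr (1/3) \<le> dist x y powr (1/3)" by (intro powr_mono2) auto
        show "C i \<ge> 0" by (simp add: C_def)
      qed
      finally show "\<bar>w i (x$i) - w i (y$i)\<bar> \<le> C i * dist x y powr (1/3)" .
    qed
    also have "\<dots> = (\<Sum>i\<in>UNIV. C i) * dist x y powr (1/3)" by (simp add: sum_distrib_right)
    finally show ?thesis .
  qed
  show ?thesis
    unfolding C1_alpha_on_def using deriv hol by blast
qed

end
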